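(* Let $d,R\in\mathbb N$, $p\in(0,1)$, $\mathsf v>0$. Let $(M_t)=(\eta_t,\zeta_t)$ be the voter model with range $R$ on dynamical percolation with parameters $\mathsf v,p$, and let $(\mathcal C_t,\mathcal A_t,\mathcal B_t)$ be the coalescing random walks on dynamical percolation chain. Define, for $\eta\in\{0,1\}^{\mathbb Z^d}$, $\zeta\in\{0,1\}^{E(\mathbb Z^d)}$, finite $C\subseteq\mathbb Z^d$ and finite disjoint $E,F\subseteq E(\mathbb Z^d)$, $$H(\eta,\zeta,C,E,F)=p^{-|E|}(1-p)^{-|F|}\prod_{x\in C}\eta(x)\prod_{e\in E}\zeta(e)\prod_{e\in F}(1-\zeta(e)).$$ Then for all such $\eta,\zeta,C,E,F$ and all $t\ge0$, $$E_{\eta,\zeta}\big[H(\eta_t,\zeta_t,C,E,F)\big]=\mathbf E_{C,E,F}\big[H(\eta,\zeta,\mathcal C_t,\mathcal A_t,\mathcal B_t)\big],$$ where $E_{\eta,\zeta}$ is expectation for $(M_t)$ started at $(\eta,\zeta)$ and $\mathbf E_{C,E,F}$ for the chain started at $(C,E,F)$.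
   Context: $B_1(x,R)=\{y:|y-x|_1\le R\}$, $|B_1(R)|$ its cardinality, $E_1(x,R)$ the nearest-neighbour edges with both endpoints in $B_1(x,R)$. Dynamical percolation: each edge independently flips 0→1 at rate $p\mathsf v$ and 1→0 at rate $(1-p)\mathsf v$ (1 = open). The voter model with range $R$ on dynamical percolation is the process $(\eta_t,\zeta_t)$ on $\{0,1\}^{\mathbb Z^d}\times\{0,1\}^{E(\mathbb Z^d)}$ where $\zeta_t$ evolves as dynamical percolation and, for each ordered pair $(x,y)$ with $1\le|x-y|_1\le R$, at rate $1/(|B_1(R)|-1)$ site $x$ adopts $\eta_t(y)$ provided $x$ and $y$ are joined by a path of $\zeta_t$-open edges with all vertices in $B_1(x,R)$. The coalescing random walks on dynamical percolation chain $(\mathcal C_t,\mathcal A_t,\mathcal B_t)$ has state space: $C$ a finite subset of $\mathbb Z^d$, $E,F$ disjoint finite sets of edges, and jump rates: (i) $(C,E,F)\to(C,E\setminus\{e\},F\setminus\{e\})$ at rate $\mathsf v$ for each $e\in E\cup F$; (ii) for each $x\in C$, $y\in B_1(x,R)\setminus\{x\}$, and each partition $(E',F')$ of $E_1(x,R)\setminus(E\cup F)$ into two disjoint sets, at rate $p^{|E'|}(1-p)^{|F'|}/(|B_1(R)|-1)$ the chain jumps to $((C\setminus\{x\})\cup\{y\},E\cup E',F\cup F')$ if $x$ and $y$ are joined by a path using only edges of $E\cup E'$ with all vertices in $B_1(x,R)$, and to $(C,E\cup E',F\cup F')$ otherwise. *)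

theory Defs
  imports "HOL-Probability.Probability"
begin

(* Sites of Z^d: functions 'd => int, with 'd a finite (nonempty) index type of size d. *)
type_synonym 'd site = "'d \<Rightarrow> int"
(* Nearest-neighbour edges of Z^d: (z,i) is the edge {z, z + unit vector i}.
   This is a bijective encoding of E(Z^d). *)
type_synonym 'd edge = "('d \<Rightarrow> int) \<times> 'd"

definition dist1 :: "'d::finite site \<Rightarrow> 'd site \<Rightarrow> int" where
  "dist1 x y = (\<Sum>j\<in>UNIV. \<bar>x j - y j\<bar>)"

definition ball1 :: "'d::finite site \<Rightarrow> nat \<Rightarrow> 'd site set" where
  "ball1 x R = {y. dist1 y x \<le> int R}"

definition ballcard :: "'d::finite itself \<Rightarrow> nat \<Rightarrow> nat" where
  "ballcard _ R = card (ball1 (\<lambda>_::'d. 0) R)"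

definition ends :: "'d edge \<Rightarrow> 'd site set" where
  "ends e = {fst e, (\<lambda>j. fst e j + (if j = snd e then 1 else 0))}"

definition edges1 :: "'d::finite site \<Rightarrow> nat \<Rightarrow> 'd edge set" where
  "edges1 x R = {e. ends e \<subseteq> ball1 x R}"

definition joined :: "'d::finite edge set \<Rightarrow> 'd site \<Rightarrow> nat \<Rightarrow> 'd site \<Rightarrow> bool" where
  "joined S x R y \<longleftrightarrow>
     (x, y) \<in> {(u, w). u \<in> ball1 x R \<and> w \<in> ball1 x R \<and> (\<exists>e\<in>S. ends e = {u, w})}\<^sup>*"

type_synonym 'd vconf = "('d site \<Rightarrow> bool) \<times> ('d edge \<Rightarrow> bool)"

(* state space {0,1}^{Z^d} x {0,1}^{E(Z^d)} with the product sigma-algebra (1 = True) *)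
definition VM :: "'d::finite vconf measure" where
  "VM = (PiM UNIV (\<lambda>_. count_space UNIV)) \<Otimes>\<^sub>M (PiM UNIV (\<lambda>_. count_space UNIV))"

definition is_local :: "('d::finite vconf \<Rightarrow> real) \<Rightarrow> bool" where
  "is_local f \<longleftrightarrow> (\<exists>A B. finite A \<and> finite B \<and>
      (\<forall>\<eta> \<zeta> \<eta>' \<zeta>'. (\<forall>x\<in>A. \<eta> x = \<eta>' x) \<longrightarrow> (\<forall>e\<in>B. \<zeta> e = \<zeta>' e) \<longrightarrow>
          f (\<eta>, \<zeta>) = f (\<eta>', \<zeta>')))"

definition voter_gen :: "real \<Rightarrow> real \<Rightarrow> nat \<Rightarrow> ('d::finite vconf \<Rightarrow> real) \<Rightarrow> 'd vconf \<Rightarrow> real" where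
  "voter_gen p v R f \<xi> =
     (case \<xi> of (\<eta>, \<zeta>) \<Rightarrow>
       (\<Sum>\<^sub>\<infinity>e\<in>UNIV. (if \<zeta> e then (1 - p) * v else p * v) * (f (\<eta>, \<zeta>(e := \<not> \<zeta> e)) - f (\<eta>, \<zeta>)))
     + (\<Sum>\<^sub>\<infinity>x\<in>UNIV. \<Sum>y\<in>ball1 x R - {x}.
           (1 / (real (ballcard TYPE('d) R) - 1)) * of_bool (joined {e. \<zeta> e} x R y)
             * (f (\<eta>(x := \<eta> y), \<zeta>) - f (\<eta>, \<zeta>))))"

(* mu xi t is the law of (eta_t, zeta_t) for the voter model on dynamical percolation started
   at xi; it is characterised by mu xi 0 = delta_xi and the Kolmogorov forward equation
   d/dt E[f(M_t)] = E[(Omega f)(M_t)] for all local (cylinder) functions f. *)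
definition voter_law :: "real \<Rightarrow> real \<Rightarrow> nat \<Rightarrow> ('d::finite vconf \<Rightarrow> real \<Rightarrow> 'd vconf measure) \<Rightarrow> bool" where
  "voter_law p v R \<mu> \<longleftrightarrow>
     (\<forall>\<xi>. \<mu> \<xi> 0 = return VM \<xi>
        \<and> (\<forall>t\<ge>0. prob_space (\<mu> \<xi> t) \<and> sets (\<mu> \<xi> t) = sets VM)
        \<and> (\<forall>f. is_local f \<and> f \<in> borel_measurable VM \<longrightarrow>
              (\<forall>t\<ge>0. ((\<lambda>s. \<integral>\<omega>. f \<omega> \<partial>(\<mu> \<xi> s)) has_real_derivative
                          (\<integral>\<omega>. voter_gen p v R f \<omega> \<partial>(\<mu> \<xi> t))) (at t within {0..}))))"

type_synonym 'd dstate = "'d site set \<times> 'd edge set \<times> 'd edge set"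

(* Sum over all transitions of the chain out of state s of  rate * g(target).
   Transitions (i) and (ii) are listed exactly as in the definition (including the
   possibly trivial jumps of type (ii)). *)
definition dual_jumpsum :: "real \<Rightarrow> real \<Rightarrow> nat \<Rightarrow> ('d::finite dstate \<Rightarrow> real) \<Rightarrow> 'd dstate \<Rightarrow> real" where
  "dual_jumpsum p v R g s =
     (case s of (C, E, F) \<Rightarrow>
        (\<Sum>e\<in>E \<union> F. v * g (C, E - {e}, F - {e}))
      + (\<Sum>x\<in>C. \<Sum>y\<in>ball1 x R - {x}. \<Sum>E'\<in>Pow (edges1 x R - (E \<union> F)).
           (let F' = (edges1 x R - (E \<union> F)) - E' in
             p ^ card E' * (1 - p) ^ card F' / (real (ballcard TYPE('d) R) - 1)
             * g (if joined (E \<union> E') x R y then (C - {x}) \<union> {y} else C, E \<union> E', F \<union> F'))))"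

definition dual_q :: "real \<Rightarrow> real \<Rightarrow> nat \<Rightarrow> 'd::finite dstate \<Rightarrow> real" where
  "dual_q p v R s = dual_jumpsum p v R (\<lambda>_. 1) s"

(* dual_u p v R g n t s = E_s[ g(X_t) ; exactly n jumps in [0,t] ] (first-jump decomposition) *)
primrec dual_u :: "real \<Rightarrow> real \<Rightarrow> nat \<Rightarrow> ('d::finite dstate \<Rightarrow> real) \<Rightarrow> nat \<Rightarrow> real \<Rightarrow> 'd dstate \<Rightarrow> real" where
  "dual_u p v R g 0 t s = exp (- dual_q p v R s * t) * g s"
| "dual_u p v R g (Suc n) t s =
     integral {0..t} (\<lambda>r. exp (- dual_q p v R s * r) * dual_jumpsum p v R (dual_u p v R g n (t - r)) s)"

(* E_{s}[ g(X_t) ] for the (minimal = non-explosive) continuous-time chain, g \<ge> 0 *)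
definition dual_expect :: "real \<Rightarrow> real \<Rightarrow> nat \<Rightarrow> ('d::finite dstate \<Rightarrow> real) \<Rightarrow> real \<Rightarrow> 'd dstate \<Rightarrow> real" where
  "dual_expect p v R g t s = (\<Sum>n. dual_u p v R g n t s)"

definition Hfun :: "real \<Rightarrow> 'd::finite vconf \<Rightarrow> 'd dstate \<Rightarrow> real" where
  "Hfun p \<xi> s = (case \<xi> of (\<eta>, \<zeta>) \<Rightarrow> case s of (C, E, F) \<Rightarrow>
      p powi (- int (card E)) * (1 - p) powi (- int (card F))
      * (\<Prod>x\<in>C. of_bool (\<eta> x)) * (\<Prod>e\<in>E. of_bool (\<zeta> e)) * (\<Prod>e\<in>F. 1 - of_bool (\<zeta> e)))"

end

theory Submission
  imports Defs "HOL-Analysis.Harmonic_Numbers"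
begin


lemma ball1_sub: "ball1 (x::'d::finite site) R \<subseteq> PiE UNIV (\<lambda>j. {x j - int R .. x j + int R})"
proof
  fix y assume "y \<in> ball1 x R"
  hence h: "(\<Sum>j\<in>UNIV. \<bar>y j - x j\<bar>) \<le> int R" by (simp add: ball1_def dist1_def)
  have hj: "\<bar>y j - x j\<bar> \<le> int R" for j
  proof -
    have "\<bar>y j - x j\<bar> \<le> (\<Sum>j\<in>UNIV. \<bar>y j - x j\<bar>)"
      by (rule member_le_sum) auto
    thus ?thesis using h by linarith
  qed
  have "y j \<in> {x j - int R .. x j + int R}" for j using hj[of j] by (simp add: abs_le_iff)
  then show "y \<in> PiE UNIV (\<lambda>j. {x j - int R .. x j + int R})"
    by (simp add: PiE_UNIV_domain)
qed

lemma finite_ball1: "finite (ball1 (x::'d::finite site) R)"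
  by (rule finite_subset[OF ball1_sub]) (auto intro: finite_PiE)

lemma card_ball1_le: "card (ball1 (x::'d::finite site) R) \<le> (2*R+1) ^ CARD('d)"
proof -
  have "card (ball1 x R) \<le> card (PiE UNIV (\<lambda>j. {x j - int R .. x j + int R}))"
    by (rule card_mono[OF _ ball1_sub]) (auto intro: finite_PiE)
  also have "\<dots> = (\<Prod>j\<in>UNIV. card {x j - int R .. x j + int R})"
    by (rule card_PiE) auto
  also have "\<dots> = (2*R+1) ^ CARD('d)"
    by (simp add: nat_add_distrib nat_mult_distrib)
  finally show ?thesis .
qed

lemma ball1_center: "x \<in> ball1 (x::'d::finite site) R"
  by (simp add: ball1_def dist1_def)

lemma ballcard_ge1: "ballcard TYPE('d::finite) R \<ge> 1"
  unfolding ballcard_def using finite_ball1 ball1_center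
  by (metis One_nat_def Suc_leI card_gt_0_iff empty_iff)

lemma edges1_sub: "edges1 (x::'d::finite site) R \<subseteq> ball1 x R \<times> UNIV"
  by (auto simp: edges1_def ends_def)

lemma finite_edges1: "finite (edges1 (x::'d::finite site) R)"
  by (rule finite_subset[OF edges1_sub]) (simp add: finite_ball1)

lemma card_edges1_le: "card (edges1 (x::'d::finite site) R) \<le> (2*R+1) ^ CARD('d) * CARD('d)"
proof -
  have "card (edges1 x R) \<le> card (ball1 x R \<times> (UNIV::'d set))"
    by (rule card_mono[OF _ edges1_sub]) (simp add: finite_ball1)
  also have "\<dots> = card (ball1 x R) * CARD('d)" by (simp add: card_cartesian_product)
  also have "\<dots> \<le> (2*R+1) ^ CARD('d) * CARD('d)" using card_ball1_le by simp
  finally show ?thesis .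
qed




definition tB :: "nat \<Rightarrow> 'd::finite site set \<Rightarrow> 'd edge set \<Rightarrow> 'd edge set \<Rightarrow> 'd site \<Rightarrow> 'd site \<Rightarrow> 'd edge set \<Rightarrow> 'd dstate" where
 "tB R C E F x y E' = (if joined (E \<union> E') x R y then (C - {x}) \<union> {y} else C, E \<union> E', F \<union> ((edges1 x R - (E \<union> F)) - E'))"

definition cf :: "real \<Rightarrow> nat \<Rightarrow> 'd::finite edge set \<Rightarrow> 'd edge set \<Rightarrow> 'd site \<Rightarrow> 'd edge set \<Rightarrow> real" where
 "cf p R E F x E' = p ^ card E' * (1 - p) ^ card ((edges1 x R - (E \<union> F)) - E') / (real (ballcard TYPE('d) R) - 1)"

definition tgts :: "nat \<Rightarrow> 'd::finite dstate \<Rightarrow> 'd dstate set" where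
 "tgts R s = (case s of (C,E,F) \<Rightarrow> (\<lambda>e. (C, E-{e}, F-{e})) ` (E \<union> F) \<union>
     {tB R C E F x y E' | x y E'. x \<in> C \<and> y \<in> ball1 x R - {x} \<and> E' \<in> Pow (edges1 x R - (E \<union> F))})"

definition invS :: "nat \<Rightarrow> 'd::finite dstate \<Rightarrow> bool" where
 "invS c0 s = (case s of (C,E,F) \<Rightarrow> finite C \<and> finite E \<and> finite F \<and> E \<inter> F = {} \<and> card C \<le> c0)"

lemma J_unf: "dual_jumpsum p v R g (C,E,F) = (\<Sum>e\<in>E\<union>F. v * g (C, E-{e}, F-{e}))
   + (\<Sum>x\<in>C. \<Sum>y\<in>ball1 x R - {x}. \<Sum>E'\<in>Pow (edges1 x R - (E\<union>F)). cf p R E F x E' * g (tB R C E F x y E'))"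
  by (simp add: dual_jumpsum_def Let_def cf_def tB_def)

lemma cB_nonneg: "0 \<le> 1 / (real (ballcard TYPE('d::finite) R) - 1)"
  using ballcard_ge1[where 'd='d and R=R] by simp

lemma cB_le1: "1 / (real (ballcard TYPE('d::finite) R) - 1) \<le> 1"
proof (cases "ballcard TYPE('d) R = 1")
  case True thus ?thesis by simp
next
  case False
  hence "real (ballcard TYPE('d) R) - 1 \<ge> 1" using ballcard_ge1[where 'd='d and R=R] by simp
  thus ?thesis by simp
qed

lemma cf_nonneg: "0 \<le> p \<Longrightarrow> p \<le> 1 \<Longrightarrow> 0 \<le> cf p R E F (x::'d::finite site) E'"
  unfolding cf_def using cB_nonneg[where 'd='d and R=R]
  by (simp add: divide_nonneg_nonneg)

lemma cf_le1: "0 \<le> p \<Longrightarrow> p \<le> 1 \<Longrightarrow> cf p R E F (x::'d::finite site) E' \<le> 1"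
proof -
  assume p: "0 \<le> p" "p \<le> 1"
  have a: "p ^ card E' * (1 - p) ^ card ((edges1 x R - (E \<union> F)) - E') \<le> 1"
    using p by (intro mult_le_one power_le_one) auto
  have b: "0 \<le> p ^ card E' * (1 - p) ^ card ((edges1 x R - (E \<union> F)) - E')" using p by simp
  have "cf p R E F x E' = (p ^ card E' * (1 - p) ^ card ((edges1 x R - (E \<union> F)) - E')) * (1 / (real (ballcard TYPE('d) R) - 1))"
    by (simp add: cf_def)
  also have "\<dots> \<le> 1 * 1"
    using a b cB_le1[where 'd='d and R=R] cB_nonneg[where 'd='d and R=R] by (intro mult_mono) auto
  finally show ?thesis by simp
qed

lemma tgtsA: "e \<in> E \<union> F \<Longrightarrow> (C, E-{e}, F-{e}) \<in> tgts R (C,E,F)"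
  by (simp add: tgts_def)

lemma tgtsB: "x \<in> C \<Longrightarrow> y \<in> ball1 x R - {x} \<Longrightarrow> E' \<in> Pow (edges1 x R - (E \<union> F)) \<Longrightarrow> tB R C E F x y E' \<in> tgts R (C,E,F)"
  unfolding tgts_def by blast

lemma J_mono:
  assumes "0 \<le> p" "p \<le> 1" "0 \<le> v" and le: "\<And>s'. s' \<in> tgts R (C,E,F) \<Longrightarrow> f s' \<le> g s'"
  shows "dual_jumpsum p v R f (C,E,F) \<le> dual_jumpsum p v R g (C,E,F)"
proof -
  have A: "\<And>e. e \<in> E \<union> F \<Longrightarrow> f (C,E-{e},F-{e}) \<le> g (C,E-{e},F-{e})" using le tgtsA by blast
  have B: "\<And>x y E'. x \<in> C \<Longrightarrow> y \<in> ball1 x R - {x} \<Longrightarrow> E' \<in> Pow (edges1 x R - (E \<union> F)) \<Longrightarrow>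
     f (tB R C E F x y E') \<le> g (tB R C E F x y E')" using le tgtsB by blast
  show ?thesis unfolding J_unf
    apply (intro add_mono sum_mono mult_left_mono)
    using A B assms(1-3) cf_nonneg by auto
qed

lemma J_cong:
  assumes le: "\<And>s'. s' \<in> tgts R (C,E,F) \<Longrightarrow> f s' = g s'"
  shows "dual_jumpsum p v R f (C,E,F) = dual_jumpsum p v R g (C,E,F)"
proof -
  have A: "\<And>e. e \<in> E \<union> F \<Longrightarrow> f (C,E-{e},F-{e}) = g (C,E-{e},F-{e})" using le tgtsA by blast
  have B: "\<And>x y E'. x \<in> C \<Longrightarrow> y \<in> ball1 x R - {x} \<Longrightarrow> E' \<in> Pow (edges1 x R - (E \<union> F)) \<Longrightarrow>
     f (tB R C E F x y E') = g (tB R C E F x y E')" using le tgtsB by blast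
  show ?thesis unfolding J_unf
    apply (intro arg_cong2[where f="(+)"] sum.cong refl arg_cong2[where f="(*)"])
    using A B by auto
qed

lemma J_add: "dual_jumpsum p v R (\<lambda>s. f s + g s) s = dual_jumpsum p v R f s + dual_jumpsum p v R g s"
  by (cases s) (simp add: J_unf sum.distrib algebra_simps)

lemma J_cmult: "dual_jumpsum p v R (\<lambda>s. c * f s) s = c * dual_jumpsum p v R f s"
  by (cases s) (simp add: J_unf sum_distrib_left algebra_simps)

lemma J_diff: "dual_jumpsum p v R (\<lambda>s. f s - g s) s = dual_jumpsum p v R f s - dual_jumpsum p v R g s"
  by (cases s) (simp add: J_unf sum_subtractf algebra_simps)

lemma J_sub_const: "dual_jumpsum p v R (\<lambda>s'. f s' - c) s = dual_jumpsum p v R f s - c * dual_q p v R s"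
  using J_diff[of p v R f "\<lambda>_. c" s] J_cmult[of p v R c "\<lambda>_. 1" s]
  by (simp add: dual_q_def)

lemma q_nonneg: "0 \<le> p \<Longrightarrow> p \<le> 1 \<Longrightarrow> 0 \<le> v \<Longrightarrow> 0 \<le> dual_q p v R (s::'d::finite dstate)"
  unfolding dual_q_def by (cases s) (auto simp: J_unf intro!: add_nonneg_nonneg sum_nonneg cf_nonneg mult_nonneg_nonneg)

lemma tgts_cases:
  assumes "s' \<in> tgts R (C,E,F)"
  shows "(\<exists>e\<in>E\<union>F. s' = (C, E - {e}, F - {e})) \<or> (\<exists>x y E'. s' = tB R C E F x y E' \<and> x \<in> C \<and> y \<in> ball1 x R - {x} \<and> E' \<in> Pow (edges1 x R - (E \<union> F)))"
  using assms unfolding tgts_def by (simp only: prod.case Un_iff image_iff mem_Collect_eq)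

lemma tgts_inv:
  assumes "invS c0 (C,E,F)" "s' \<in> tgts R (C,E,F)"
  shows "invS c0 s'"
proof -
  from tgts_cases[OF assms(2)] show ?thesis
  proof (elim disjE bexE exE conjE)
  fix e assume "e \<in> E \<union> F" "s' = (C, E - {e}, F - {e})"
  thus "invS c0 s'" using assms(1) by (simp add: invS_def) blast
next
  fix x y E' assume h: "s' = tB R C E F x y E'" "x \<in> C" "y \<in> ball1 x R - {x}" "E' \<in> Pow (edges1 x R - (E \<union> F))"
  have fE: "finite E'" using h(4) finite_edges1 by (metis PowD finite_Diff finite_subset)
  have i1: "finite C" "finite E" "finite F" "E \<inter> F = {}" "card C \<le> c0" using assms(1) by (auto simp: invS_def)
  have c1: "card (C - {x} \<union> {y}) \<le> card C"
  proof -
    have a: "card (C - {x} \<union> {y}) \<le> Suc (card (C - {x}))" using i1(1) by (simp add: card_insert_if)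
    have b: "card (C - {x}) = card C - 1" using h(2) by (simp add: card_Diff_singleton)
    have c: "card C \<ge> 1" using h(2) i1(1) by (metis One_nat_def Suc_leI card_gt_0_iff empty_iff)
    show ?thesis using a b c by arith
  qed
  have d: "(E \<union> E') \<inter> (F \<union> (edges1 x R - (E \<union> F) - E')) = {}" using h(4) i1(4) by blast
  have f1: "finite (F \<union> (edges1 x R - (E \<union> F) - E'))" using i1(3) finite_edges1[of x R] by blast
  have f2: "finite (E \<union> E')" using i1(2) fE by blast
  have f3: "finite (C - {x} \<union> {y})" using i1(1) by blast
  show "invS c0 s'"
    unfolding h(1) tB_def invS_def using d f1 f2 f3 i1 c1 by (simp only: split: if_split prod.split) simp
qed
qed




lemma infsum_support:
  fixes f :: "'a \<Rightarrow> real"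
  assumes "finite A" "\<And>x. x \<notin> A \<Longrightarrow> f x = 0"
  shows "infsum f UNIV = sum f A"
proof -
  have "infsum f UNIV = infsum f A"
    by (rule infsum_cong_neutral) (use assms in auto)
  thus ?thesis using assms(1) by simp
qed

lemma prod_of_bool: "finite A \<Longrightarrow> (\<Prod>x\<in>A. (of_bool (P x)::real)) = of_bool (\<forall>x\<in>A. P x)"
  by (induction rule: finite_induct) auto

lemma H_eq: "Hfun p (\<eta>,\<zeta>) (C,E,F) = (inverse p)^card E * (inverse (1-p))^card F
   * (\<Prod>x\<in>C. of_bool (\<eta> x)) * (\<Prod>e\<in>E. of_bool (\<zeta> e)) * (\<Prod>e\<in>F. of_bool (\<not> \<zeta> e))"
proof -
  have "(\<Prod>e\<in>F. 1 - (of_bool (\<zeta> e)::real)) = (\<Prod>e\<in>F. of_bool (\<not> \<zeta> e))" by (rule prod.cong) auto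
  thus ?thesis unfolding Hfun_def prod.case by (simp only: power_int_minus power_inverse power_int_of_nat)
qed

lemma H_nonneg: "0 < p \<Longrightarrow> p < 1 \<Longrightarrow> 0 \<le> Hfun p \<xi> s"
  by (cases \<xi>; cases s) (auto simp: H_eq intro!: prod_nonneg mult_nonneg_nonneg)

lemma H_le: "0 < p \<Longrightarrow> p < 1 \<Longrightarrow> Hfun p \<xi> (C,E,F) \<le> (inverse p)^card E * (inverse (1-p))^card F"
proof (cases \<xi>)
  case (Pair \<eta> \<zeta>)
  assume p: "0 < p" "p < 1"
  let ?K = "(inverse p)^card E * (inverse (1-p))^card F"
  have K: "0 \<le> ?K" using p by simp
  have "(\<Prod>x\<in>C. (of_bool (\<eta> x)::real)) * (\<Prod>e\<in>E. (of_bool (\<zeta> e)::real)) * (\<Prod>e\<in>F. (of_bool (\<not> \<zeta> e)::real)) \<le> 1"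
    by (intro mult_le_one prod_le_1 prod_nonneg mult_nonneg_nonneg) auto
  from mult_left_mono[OF this K] show ?thesis by (simp add: Pair H_eq mult.assoc)
qed

lemma H_remE:
  assumes "e \<in> E" "finite E"
  shows "Hfun p (\<eta>,\<zeta>) (C,E,F) = of_bool (\<zeta> e) * inverse p * Hfun p (\<eta>,\<zeta>) (C,E-{e},F)"
proof -
  have c: "card E = Suc (card (E - {e}))" using card_Suc_Diff1[OF assms(2,1)] by simp
  have pr: "(\<Prod>e\<in>E. (of_bool (\<zeta> e)::real)) = of_bool (\<zeta> e) * (\<Prod>e\<in>E-{e}. of_bool (\<zeta> e))"
    using assms by (simp add: prod.remove)
  show ?thesis unfolding H_eq c pr by (simp add: algebra_simps)
qed

lemma H_remF:
  assumes "e \<in> F" "finite F"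
  shows "Hfun p (\<eta>,\<zeta>) (C,E,F) = of_bool (\<not> \<zeta> e) * inverse (1-p) * Hfun p (\<eta>,\<zeta>) (C,E,F-{e})"
proof -
  have c: "card F = Suc (card (F - {e}))" using card_Suc_Diff1[OF assms(2,1)] by simp
  have pr: "(\<Prod>e\<in>F. (of_bool (\<not> \<zeta> e)::real)) = of_bool (\<not> \<zeta> e) * (\<Prod>e\<in>F-{e}. of_bool (\<not> \<zeta> e))"
    using assms by (simp add: prod.remove)
  show ?thesis unfolding H_eq c pr by (simp add: algebra_simps)
qed

lemma H_upd_zeta: "e \<notin> E \<Longrightarrow> e \<notin> F \<Longrightarrow> Hfun p (\<eta>,\<zeta>(e:=b)) (C,E,F) = Hfun p (\<eta>,\<zeta>) (C,E,F)"
  unfolding H_eq by (intro arg_cong2[where f="(*)"] prod.cong refl) auto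

lemma H_upd_eta: "x \<notin> C \<Longrightarrow> Hfun p (\<eta>(x:=b),\<zeta>) (C,E,F) = Hfun p (\<eta>,\<zeta>) (C,E,F)"
  unfolding H_eq by (intro arg_cong2[where f="(*)"] prod.cong refl) auto

lemma edge_term:
  assumes p: "0 < p" "p < 1" and fin: "finite E" "finite F" and dis: "E \<inter> F = {}"
  shows "(if \<zeta> e then (1 - p) * v else p * v) * (Hfun p (\<eta>, \<zeta>(e := \<not> \<zeta> e)) (C,E,F) - Hfun p (\<eta>, \<zeta>) (C,E,F))
     = (if e \<in> E \<union> F then v * (Hfun p (\<eta>,\<zeta>) (C,E-{e},F-{e}) - Hfun p (\<eta>,\<zeta>) (C,E,F)) else 0)"
proof -
  consider "e \<in> E" | "e \<in> F" | "e \<notin> E \<union> F" by blast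
  thus ?thesis
  proof cases
    case 1
    hence nF: "e \<notin> F" using dis by blast
    hence F': "F - {e} = F" by simp
    let ?W = "Hfun p (\<eta>,\<zeta>) (C,E-{e},F)"
    have W: "Hfun p (\<eta>,\<zeta>(e := \<not> \<zeta> e)) (C,E-{e},F) = ?W" using nF by (intro H_upd_zeta) auto
    have h1: "Hfun p (\<eta>, \<zeta>(e := \<not> \<zeta> e)) (C,E,F) = of_bool (\<not> \<zeta> e) * inverse p * ?W"
      using H_remE[OF 1 fin(1), of p \<eta> "\<zeta>(e := \<not> \<zeta> e)" C F] W by simp
    have h2: "Hfun p (\<eta>, \<zeta>) (C,E,F) = of_bool (\<zeta> e) * inverse p * ?W"
      using H_remE[OF 1 fin(1)] by simp
    show ?thesis unfolding h1 h2 F' using 1 p by (cases "\<zeta> e") (simp_all add: field_simps)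
  next
    case 2
    hence nE: "e \<notin> E" using dis by blast
    hence E': "E - {e} = E" by simp
    let ?W = "Hfun p (\<eta>,\<zeta>) (C,E,F-{e})"
    have W: "Hfun p (\<eta>,\<zeta>(e := \<not> \<zeta> e)) (C,E,F-{e}) = ?W" using nE by (intro H_upd_zeta) auto
    have h1: "Hfun p (\<eta>, \<zeta>(e := \<not> \<zeta> e)) (C,E,F) = of_bool (\<zeta> e) * inverse (1-p) * ?W"
      using H_remF[OF 2 fin(2), of p \<eta> "\<zeta>(e := \<not> \<zeta> e)" C E] W by simp
    have h2: "Hfun p (\<eta>, \<zeta>) (C,E,F) = of_bool (\<not> \<zeta> e) * inverse (1-p) * ?W"
      using H_remF[OF 2 fin(2)] by simp
    show ?thesis unfolding h1 h2 E' using 2 p by (cases "\<zeta> e") (simp_all add: field_simps)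
  next
    case 3
    thus ?thesis by (simp add: H_upd_zeta)
  qed
qed


lemma pw_cancel: "(p::real) \<noteq> 0 \<Longrightarrow> p ^ a * inverse p ^ (c + a) = inverse p ^ c"
proof -
  assume "p \<noteq> 0"
  hence "p ^ a * inverse p ^ a = 1" by (simp flip: power_mult_distrib)
  thus ?thesis by (simp add: power_add algebra_simps)
qed

lemma sum_cf:
  assumes "0 \<le> p" "p \<le> 1"
  shows "(\<Sum>E'\<in>Pow (edges1 x R - (E \<union> F)). cf p R E F (x::'d::finite site) E') = 1 / (real (ballcard TYPE('d) R) - 1)"
proof -
  let ?S = "edges1 x R - (E \<union> F)"
  have fS: "finite ?S" using finite_edges1[of x R] by blast
  have "(\<Prod>e\<in>?S. p + (1 - p)) = (\<Sum>X\<in>Pow ?S. (\<Prod>e\<in>X. p) * (\<Prod>e\<in>?S - X. 1 - p))"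
    by (rule prod_add[OF fS])
  hence one: "(\<Sum>X\<in>Pow ?S. p ^ card X * (1 - p) ^ card (?S - X)) = 1" by simp
  have "(\<Sum>E'\<in>Pow ?S. cf p R E F x E') = (\<Sum>X\<in>Pow ?S. p ^ card X * (1 - p) ^ card (?S - X)) / (real (ballcard TYPE('d) R) - 1)"
    unfolding cf_def by (simp add: sum_divide_distrib)
  thus ?thesis using one by simp
qed

lemma ind_eq:
  assumes "E' \<subseteq> S" "finite S"
  shows "(\<Prod>e\<in>E'. (of_bool (\<zeta> e)::real)) * (\<Prod>e\<in>S-E'. of_bool (\<not> \<zeta> e)) = of_bool (E' = {e\<in>S. \<zeta> e})"
proof -
  have fE: "finite E'" using assms finite_subset by blast
  show ?thesis using assms by (auto simp: prod_of_bool fE)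
qed

lemma joined_eq:
  assumes "\<forall>e\<in>E. \<zeta> e" "\<forall>e\<in>F. \<not> \<zeta> e"
  shows "joined (E \<union> {e\<in>edges1 x R - (E \<union> F). \<zeta> e}) x R y = joined {e. \<zeta> e} x R y"
proof -
  have "{(u, w). u \<in> ball1 x R \<and> w \<in> ball1 x R \<and> (\<exists>e\<in>E \<union> {e\<in>edges1 x R - (E \<union> F). \<zeta> e}. ends e = {u, w})}
      = {(u, w). u \<in> ball1 x R \<and> w \<in> ball1 x R \<and> (\<exists>e\<in>{e. \<zeta> e}. ends e = {u, w})}"
  proof (intro Collect_cong ext, clarify)
    fix u w
    show "(u \<in> ball1 x R \<and> w \<in> ball1 x R \<and> (\<exists>e\<in>E \<union> {e\<in>edges1 x R - (E \<union> F). \<zeta> e}. ends e = {u, w})) =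
          (u \<in> ball1 x R \<and> w \<in> ball1 x R \<and> (\<exists>e\<in>{e. \<zeta> e}. ends e = {u, w}))"
    proof (intro iffI conjI)
      assume h: "u \<in> ball1 x R \<and> w \<in> ball1 x R \<and> (\<exists>e\<in>{e. \<zeta> e}. ends e = {u, w})"
      then obtain e where e: "\<zeta> e" "ends e = {u,w}" by auto
      hence "e \<in> edges1 x R" using h by (auto simp: edges1_def)
      hence "e \<in> E \<union> {e\<in>edges1 x R - (E \<union> F). \<zeta> e}" using e assms by auto
      thus "\<exists>e\<in>E \<union> {e\<in>edges1 x R - (E \<union> F). \<zeta> e}. ends e = {u, w}" using e by blast
    qed (use assms in auto)
  qed
  thus ?thesis unfolding joined_def by simp
qed

lemma eprod_move:
  assumes "x \<in> C" "finite C"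
  shows "(\<Prod>z\<in>C - {x} \<union> {y}. (of_bool (\<eta> z)::real)) = (\<Prod>z\<in>C. of_bool ((\<eta>(x := \<eta> y)) z))"
proof -
  have r: "(\<Prod>z\<in>C. (of_bool ((\<eta>(x := \<eta> y)) z)::real)) = of_bool (\<eta> y) * (\<Prod>z\<in>C-{x}. of_bool ((\<eta>(x := \<eta> y)) z))"
    using assms by (simp add: prod.remove)
  also have "(\<Prod>z\<in>C-{x}. (of_bool ((\<eta>(x := \<eta> y)) z)::real)) = (\<Prod>z\<in>C-{x}. of_bool (\<eta> z))"
    by (rule prod.cong) auto
  finally have r2: "(\<Prod>z\<in>C. (of_bool ((\<eta>(x := \<eta> y)) z)::real)) = of_bool (\<eta> y) * (\<Prod>z\<in>C-{x}. of_bool (\<eta> z))" .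
  show ?thesis
  proof (cases "y \<in> C - {x}")
    case True
    hence e: "C - {x} \<union> {y} = C - {x}" by blast
    have "(\<Prod>z\<in>C-{x}. (of_bool (\<eta> z)::real)) = of_bool (\<eta> y) * (\<Prod>z\<in>C-{x}-{y}. of_bool (\<eta> z))"
      using True assms by (simp add: prod.remove)
    thus ?thesis unfolding r2 e by simp
  next
    case False
    thus ?thesis unfolding r2 using assms by simp
  qed
qed


lemma cfH:
  assumes p: "0 < p" "p < 1" and fin: "finite E" "finite F" and E': "E' \<subseteq> edges1 x R - (E \<union> F)"
  shows "cf p R E F (x::'d::finite site) E' * Hfun p (\<eta>,\<zeta>) (tB R C E F x y E')
     = 1 / (real (ballcard TYPE('d) R) - 1) * ((inverse p)^card E * (inverse (1-p))^card F)
       * (\<Prod>z\<in>(if joined (E \<union> E') x R y then C - {x} \<union> {y} else C). of_bool (\<eta> z))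
       * ((\<Prod>e\<in>E. of_bool (\<zeta> e)) * (\<Prod>e\<in>F. of_bool (\<not> \<zeta> e)))
       * ((\<Prod>e\<in>E'. of_bool (\<zeta> e)) * (\<Prod>e\<in>(edges1 x R - (E \<union> F)) - E'. of_bool (\<not> \<zeta> e)))"
proof -
  let ?S = "edges1 x R - (E \<union> F)"
  let ?C' = "(if joined (E \<union> E') x R y then C - {x} \<union> {y} else C)"
  have fS: "finite ?S" using finite_edges1[of x R] by blast
  have fE': "finite E'" using E' fS finite_subset by blast
  have d1: "E \<inter> E' = {}" using E' by blast
  have d2: "F \<inter> (?S - E') = {}" by blast
  have c1: "card (E \<union> E') = card E + card E'" using fin fE' d1 by (simp add: card_Un_disjoint)
  have c2: "card (F \<union> (?S - E')) = card F + card (?S - E')" using fin fS d2 by (simp add: card_Un_disjoint)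
  have p1: "(\<Prod>e\<in>E \<union> E'. (of_bool (\<zeta> e)::real)) = (\<Prod>e\<in>E. of_bool (\<zeta> e)) * (\<Prod>e\<in>E'. of_bool (\<zeta> e))"
    using fin fE' d1 by (simp add: prod.union_disjoint)
  have p2: "(\<Prod>e\<in>F \<union> (?S - E'). (of_bool (\<not> \<zeta> e)::real)) = (\<Prod>e\<in>F. of_bool (\<not> \<zeta> e)) * (\<Prod>e\<in>?S - E'. of_bool (\<not> \<zeta> e))"
    using fin fS d2 by (simp add: prod.union_disjoint)
  have h1: "p ^ card E' * inverse p ^ (card E + card E') = inverse p ^ card E" using p by (intro pw_cancel) auto
  have h2: "(1-p) ^ card (?S - E') * inverse (1-p) ^ (card F + card (?S - E')) = inverse (1-p) ^ card F" using p by (intro pw_cancel) auto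
  have "Hfun p (\<eta>,\<zeta>) (tB R C E F x y E') = inverse p ^ (card E + card E') * inverse (1-p) ^ (card F + card (?S - E'))
      * (\<Prod>z\<in>?C'. of_bool (\<eta> z)) * ((\<Prod>e\<in>E. of_bool (\<zeta> e)) * (\<Prod>e\<in>E'. of_bool (\<zeta> e)))
      * ((\<Prod>e\<in>F. of_bool (\<not> \<zeta> e)) * (\<Prod>e\<in>?S - E'. of_bool (\<not> \<zeta> e)))"
    unfolding tB_def H_eq c1 c2 p1 p2 ..
  moreover have "cf p R E F x E' = p ^ card E' * (1-p) ^ card (?S - E') * (1 / (real (ballcard TYPE('d) R) - 1))"
    unfolding cf_def by simp
  ultimately show ?thesis
    unfolding h1[symmetric] h2[symmetric] by (simp add: ac_simps)
qed


lemma voter_term: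
  assumes p: "0 < p" "p < 1" and fin: "finite C" "finite E" "finite F" and x: "x \<in> C"
  shows "(\<Sum>E'\<in>Pow (edges1 x R - (E \<union> F)). cf p R E F (x::'d::finite site) E' * (Hfun p (\<eta>,\<zeta>) (tB R C E F x y E') - Hfun p (\<eta>,\<zeta>) (C,E,F)))
    = 1 / (real (ballcard TYPE('d) R) - 1) * of_bool (joined {e. \<zeta> e} x R y) * (Hfun p (\<eta>(x := \<eta> y),\<zeta>) (C,E,F) - Hfun p (\<eta>,\<zeta>) (C,E,F))"
proof -
  let ?S = "edges1 x R - (E \<union> F)"
  let ?cB = "1 / (real (ballcard TYPE('d) R) - 1)"
  let ?Pre = "(inverse p)^card E * (inverse (1-p))^card F"
  let ?Zs = "(\<Prod>e\<in>E. (of_bool (\<zeta> e)::real)) * (\<Prod>e\<in>F. of_bool (\<not> \<zeta> e))"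
  let ?Es = "{e\<in>?S. \<zeta> e}"
  let ?C' = "\<lambda>E'. (if joined (E \<union> E') x R y then C - {x} \<union> {y} else C)"
  let ?G = "\<lambda>E'. ?cB * ?Pre * (\<Prod>z\<in>?C' E'. (of_bool (\<eta> z)::real)) * ?Zs"
  have fS: "finite ?S" using finite_edges1[of x R] by blast
  have H0: "Hfun p (\<eta>,\<zeta>) (C,E,F) = ?Pre * (\<Prod>z\<in>C. of_bool (\<eta> z)) * ?Zs"
    unfolding H_eq by (simp add: ac_simps)
  have H1: "Hfun p (\<eta>(x := \<eta> y),\<zeta>) (C,E,F) = ?Pre * (\<Prod>z\<in>C. of_bool ((\<eta>(x := \<eta> y)) z)) * ?Zs"
    unfolding H_eq by (simp add: ac_simps)
  have "(\<Sum>E'\<in>Pow ?S. cf p R E F x E' * (Hfun p (\<eta>,\<zeta>) (tB R C E F x y E') - Hfun p (\<eta>,\<zeta>) (C,E,F)))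
      = (\<Sum>E'\<in>Pow ?S. cf p R E F x E' * Hfun p (\<eta>,\<zeta>) (tB R C E F x y E')) - (\<Sum>E'\<in>Pow ?S. cf p R E F x E') * Hfun p (\<eta>,\<zeta>) (C,E,F)"
    by (simp add: sum_subtractf sum_distrib_right right_diff_distrib)
  also have "(\<Sum>E'\<in>Pow ?S. cf p R E F x E') = ?cB" using p by (intro sum_cf) auto
  also have "(\<Sum>E'\<in>Pow ?S. cf p R E F x E' * Hfun p (\<eta>,\<zeta>) (tB R C E F x y E'))
      = (\<Sum>E'\<in>Pow ?S. if E' = ?Es then ?G E' else 0)"
  proof (rule sum.cong[OF refl])
    fix E' assume "E' \<in> Pow ?S"
    hence E': "E' \<subseteq> ?S" by simp
    show "cf p R E F x E' * Hfun p (\<eta>,\<zeta>) (tB R C E F x y E') = (if E' = ?Es then ?G E' else 0)"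
      unfolding cfH[OF p fin(2,3) E'] ind_eq[OF E' fS] by simp
  qed
  also have "\<dots> = ?G ?Es"
  proof -
    have m: "?Es \<in> Pow ?S" by auto
    show ?thesis by (simp only: sum.delta[OF finite_Pow_iff[THEN iffD2, OF fS]] m if_True)
  qed
  finally have L: "(\<Sum>E'\<in>Pow ?S. cf p R E F x E' * (Hfun p (\<eta>,\<zeta>) (tB R C E F x y E') - Hfun p (\<eta>,\<zeta>) (C,E,F)))
      = ?G ?Es - ?cB * Hfun p (\<eta>,\<zeta>) (C,E,F)" .
  have Zs: "?Zs = of_bool ((\<forall>e\<in>E. \<zeta> e) \<and> (\<forall>e\<in>F. \<not> \<zeta> e))" using fin by (simp add: prod_of_bool)
  show ?thesis
  proof (cases "(\<forall>e\<in>E. \<zeta> e) \<and> (\<forall>e\<in>F. \<not> \<zeta> e)")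
    case False
    thus ?thesis unfolding L unfolding H0 H1 Zs by auto
  next
    case True
    have J: "joined (E \<union> ?Es) x R y = joined {e. \<zeta> e} x R y" using True by (intro joined_eq) auto
    show ?thesis
    proof (cases "joined {e. \<zeta> e} x R y")
      case True
      thus ?thesis unfolding L unfolding H0 H1 using J eprod_move[OF x fin(1), of \<eta> y] by (simp add: algebra_simps)
    next
      case False
      thus ?thesis unfolding L unfolding H0 H1 using J by (simp add: algebra_simps)
    qed
  qed
qed


lemma duality:
  fixes C :: "'d::finite site set"
  assumes p: "0 < p" "p < 1" and fin: "finite C" "finite E" "finite F" and dis: "E \<inter> F = {}"
  shows "voter_gen p v R (\<lambda>\<omega>. Hfun p \<omega> (C,E,F)) (\<eta>,\<zeta>)
     = dual_jumpsum p v R (Hfun p (\<eta>,\<zeta>)) (C,E,F) - dual_q p v R (C,E,F) * Hfun p (\<eta>,\<zeta>) (C,E,F)"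
proof -
  let ?H0 = "Hfun p (\<eta>,\<zeta>) (C,E,F)"
  have R: "dual_jumpsum p v R (Hfun p (\<eta>,\<zeta>)) (C,E,F) - dual_q p v R (C,E,F) * ?H0
     = (\<Sum>e\<in>E\<union>F. v * (Hfun p (\<eta>,\<zeta>) (C, E-{e}, F-{e}) - ?H0))
     + (\<Sum>x\<in>C. \<Sum>y\<in>ball1 x R - {x}. \<Sum>E'\<in>Pow (edges1 x R - (E\<union>F)). cf p R E F x E' * (Hfun p (\<eta>,\<zeta>) (tB R C E F x y E') - ?H0))"
  proof -
    have "dual_jumpsum p v R (Hfun p (\<eta>,\<zeta>)) (C,E,F) - dual_q p v R (C,E,F) * ?H0
       = dual_jumpsum p v R (\<lambda>s'. Hfun p (\<eta>,\<zeta>) s' - ?H0) (C,E,F)"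
      using J_sub_const[of p v R "Hfun p (\<eta>,\<zeta>)" ?H0 "(C,E,F)"] by (simp add: mult.commute)
    thus ?thesis by (simp only: J_unf)
  qed
  have A: "(\<Sum>\<^sub>\<infinity>e\<in>UNIV. (if \<zeta> e then (1 - p) * v else p * v) * (Hfun p (\<eta>, \<zeta>(e := \<not> \<zeta> e)) (C,E,F) - ?H0))
      = (\<Sum>e\<in>E\<union>F. v * (Hfun p (\<eta>,\<zeta>) (C, E-{e}, F-{e}) - ?H0))"
  proof -
    have "(\<Sum>\<^sub>\<infinity>e\<in>UNIV. (if \<zeta> e then (1 - p) * v else p * v) * (Hfun p (\<eta>, \<zeta>(e := \<not> \<zeta> e)) (C,E,F) - ?H0))
       = (\<Sum>\<^sub>\<infinity>e\<in>UNIV. (if e \<in> E \<union> F then v * (Hfun p (\<eta>,\<zeta>) (C,E-{e},F-{e}) - ?H0) else 0))"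
      by (simp only: edge_term[OF p fin(2,3) dis])
    also have "\<dots> = (\<Sum>e\<in>E\<union>F. (if e \<in> E \<union> F then v * (Hfun p (\<eta>,\<zeta>) (C,E-{e},F-{e}) - ?H0) else 0))"
      by (rule infsum_support) (use fin in auto)
    also have "\<dots> = (\<Sum>e\<in>E\<union>F. v * (Hfun p (\<eta>,\<zeta>) (C, E-{e}, F-{e}) - ?H0))"
      by (rule sum.cong) auto
    finally show ?thesis .
  qed
  have B: "(\<Sum>\<^sub>\<infinity>x\<in>UNIV. \<Sum>y\<in>ball1 x R - {x}.
           (1 / (real (ballcard TYPE('d) R) - 1)) * of_bool (joined {e. \<zeta> e} x R y)
             * (Hfun p (\<eta>(x := \<eta> y), \<zeta>) (C,E,F) - ?H0))
      = (\<Sum>x\<in>C. \<Sum>y\<in>ball1 x R - {x}. \<Sum>E'\<in>Pow (edges1 x R - (E\<union>F)). cf p R E F x E' * (Hfun p (\<eta>,\<zeta>) (tB R C E F x y E') - ?H0))"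
  proof -
    have "(\<Sum>\<^sub>\<infinity>x\<in>UNIV. \<Sum>y\<in>ball1 x R - {x}.
           (1 / (real (ballcard TYPE('d) R) - 1)) * of_bool (joined {e. \<zeta> e} x R y)
             * (Hfun p (\<eta>(x := \<eta> y), \<zeta>) (C,E,F) - ?H0))
        = (\<Sum>x\<in>C. \<Sum>y\<in>ball1 x R - {x}.
           (1 / (real (ballcard TYPE('d) R) - 1)) * of_bool (joined {e. \<zeta> e} x R y)
             * (Hfun p (\<eta>(x := \<eta> y), \<zeta>) (C,E,F) - ?H0))"
      by (rule infsum_support) (use fin in \<open>auto simp: H_upd_eta\<close>)
    also have "\<dots> = (\<Sum>x\<in>C. \<Sum>y\<in>ball1 x R - {x}. \<Sum>E'\<in>Pow (edges1 x R - (E\<union>F)). cf p R E F x E' * (Hfun p (\<eta>,\<zeta>) (tB R C E F x y E') - ?H0))"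
      by (intro sum.cong refl) (simp add: voter_term[OF p fin])
    finally show ?thesis .
  qed
  show ?thesis unfolding R voter_gen_def prod.case A B ..
qed




lemma H_fstsnd: "Hfun p \<omega> (C,E,F) = (inverse p)^card E * (inverse (1-p))^card F
   * (\<Prod>x\<in>C. of_bool (fst \<omega> x)) * (\<Prod>e\<in>E. of_bool (snd \<omega> e)) * (\<Prod>e\<in>F. of_bool (\<not> snd \<omega> e))"
  by (cases \<omega>) (simp add: H_eq)

lemma H_meas: "(\<lambda>\<omega>. Hfun p \<omega> (C,E,F)) \<in> borel_measurable (VM::'d::finite vconf measure)"
  unfolding H_fstsnd VM_def by measurable


lemma H_local:
  assumes "finite C" "finite E" "finite F"
  shows "is_local (\<lambda>\<omega>. Hfun p \<omega> (C,E,F))"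
  unfolding is_local_def
proof (intro exI[of _ C] exI[of _ "E \<union> F"] conjI allI impI)
  fix \<eta> \<zeta> \<eta>' \<zeta>' :: "_ \<Rightarrow> bool"
  assume a: "\<forall>x\<in>C. \<eta> x = \<eta>' x" "\<forall>e\<in>E \<union> F. \<zeta> e = \<zeta>' e"
  show "Hfun p (\<eta>, \<zeta>) (C, E, F) = Hfun p (\<eta>', \<zeta>') (C, E, F)"
    unfolding H_eq using a by (intro arg_cong2[where f="(*)"] prod.cong refl) auto
qed (use assms in auto)

lemma H_integrable:
  assumes "prob_space M" "sets M = sets (VM::'d::finite vconf measure)" "0 < p" "p < 1"
  shows "integrable M (\<lambda>\<omega>. Hfun p \<omega> (C,E,F))"
proof -
  interpret prob_space M by fact
  show ?thesis
  proof (rule integrable_const_bound[where B="(inverse p)^card E * (inverse (1-p))^card F"])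
    show "AE x in M. norm (Hfun p x (C, E, F)) \<le> (inverse p)^card E * (inverse (1-p))^card F"
    proof (intro AE_I2)
      fix x :: "'d vconf"
      show "norm (Hfun p x (C, E, F)) \<le> (inverse p)^card E * (inverse (1-p))^card F"
        using H_le[OF assms(3,4), of x C E F] H_nonneg[OF assms(3,4), of x "(C,E,F)"] by simp
    qed
    show "(\<lambda>\<omega>. Hfun p \<omega> (C,E,F)) \<in> borel_measurable M"
      using H_meas measurable_cong_sets[OF assms(2) refl] by blast
  qed
qed

lemma int_J:
  assumes iA: "\<And>s'. s' \<in> tgts R (C,E,F) \<Longrightarrow> integrable M (\<lambda>\<omega>. G \<omega> s')"
  shows "integrable M (\<lambda>\<omega>. dual_jumpsum p v R (G \<omega>) (C,E,F))"
    and "(\<integral>\<omega>. dual_jumpsum p v R (G \<omega>) (C,E,F) \<partial>M) = dual_jumpsum p v R (\<lambda>s'. \<integral>\<omega>. G \<omega> s' \<partial>M) (C,E,F)"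
proof -
  have A: "\<And>e. e \<in> E \<union> F \<Longrightarrow> integrable M (\<lambda>\<omega>. G \<omega> (C,E-{e},F-{e}))" using iA tgtsA by blast
  have B: "\<And>x y E'. x \<in> C \<Longrightarrow> y \<in> ball1 x R - {x} \<Longrightarrow> E' \<in> Pow (edges1 x R - (E \<union> F)) \<Longrightarrow>
     integrable M (\<lambda>\<omega>. G \<omega> (tB R C E F x y E'))" using iA tgtsB by blast
  have iA': "integrable M (\<lambda>\<omega>. \<Sum>e\<in>E\<union>F. v * G \<omega> (C, E-{e}, F-{e}))"
    using A by (intro Bochner_Integration.integrable_sum Bochner_Integration.integrable_mult_right) auto
  have iB': "integrable M (\<lambda>\<omega>. \<Sum>x\<in>C. \<Sum>y\<in>ball1 x R - {x}. \<Sum>E'\<in>Pow (edges1 x R - (E\<union>F)). cf p R E F x E' * G \<omega> (tB R C E F x y E'))"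
    using B by (intro Bochner_Integration.integrable_sum Bochner_Integration.integrable_mult_right) auto
  show "integrable M (\<lambda>\<omega>. dual_jumpsum p v R (G \<omega>) (C,E,F))"
    unfolding J_unf using iA' iB' by (rule Bochner_Integration.integrable_add)
  show "(\<integral>\<omega>. dual_jumpsum p v R (G \<omega>) (C,E,F) \<partial>M) = dual_jumpsum p v R (\<lambda>s'. \<integral>\<omega>. G \<omega> s' \<partial>M) (C,E,F)"
  proof -
    have "(\<integral>\<omega>. (\<Sum>x\<in>C. \<Sum>y\<in>ball1 x R - {x}. \<Sum>E'\<in>Pow (edges1 x R - (E\<union>F)). cf p R E F x E' * G \<omega> (tB R C E F x y E')) \<partial>M)
      = (\<Sum>x\<in>C. \<integral>\<omega>. (\<Sum>y\<in>ball1 x R - {x}. \<Sum>E'\<in>Pow (edges1 x R - (E\<union>F)). cf p R E F x E' * G \<omega> (tB R C E F x y E')) \<partial>M)"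
      by (rule Bochner_Integration.integral_sum) (use B in \<open>force intro: Bochner_Integration.integrable_sum Bochner_Integration.integrable_mult_right\<close>)
    also have "\<dots> = (\<Sum>x\<in>C. \<Sum>y\<in>ball1 x R - {x}. \<integral>\<omega>. (\<Sum>E'\<in>Pow (edges1 x R - (E\<union>F)). cf p R E F x E' * G \<omega> (tB R C E F x y E')) \<partial>M)"
      by (intro sum.cong refl Bochner_Integration.integral_sum) (use B in \<open>force intro: Bochner_Integration.integrable_sum Bochner_Integration.integrable_mult_right\<close>)
    also have "\<dots> = (\<Sum>x\<in>C. \<Sum>y\<in>ball1 x R - {x}. \<Sum>E'\<in>Pow (edges1 x R - (E\<union>F)). cf p R E F x E' * (\<integral>\<omega>. G \<omega> (tB R C E F x y E') \<partial>M))"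
      by (intro sum.cong refl) (use B in \<open>simp add: Bochner_Integration.integral_sum\<close>)
    finally show ?thesis unfolding J_unf
      using A by (simp add: Bochner_Integration.integral_add[OF iA' iB'])
  qed
qed


lemma H_integrable':
  assumes "prob_space M" "sets M = sets (VM::'d::finite vconf measure)" "0 < p" "p < 1"
  shows "integrable M (\<lambda>\<omega>. Hfun p \<omega> s)"
  using H_integrable[OF assms] by (cases s) auto

lemma U_deriv:
  fixes \<mu> :: "'d::finite vconf \<Rightarrow> real \<Rightarrow> 'd vconf measure" and C :: "'d site set"
  assumes law: "voter_law p v R \<mu>" and p: "0 < p" "p < 1"
    and fin: "finite C" "finite E" "finite F" and dis: "E \<inter> F = {}" and t: "0 \<le> t"
  shows "((\<lambda>r. \<integral>\<omega>. Hfun p \<omega> (C,E,F) \<partial>\<mu> \<xi> r) has_real_derivative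
     (dual_jumpsum p v R (\<lambda>s'. \<integral>\<omega>. Hfun p \<omega> s' \<partial>\<mu> \<xi> t) (C,E,F)
        - dual_q p v R (C,E,F) * (\<integral>\<omega>. Hfun p \<omega> (C,E,F) \<partial>\<mu> \<xi> t))) (at t within {0..})"
proof -
  have ps: "prob_space (\<mu> \<xi> t)" and st: "sets (\<mu> \<xi> t) = sets VM" using law t unfolding voter_law_def by blast+
  have D: "((\<lambda>r. \<integral>\<omega>. Hfun p \<omega> (C,E,F) \<partial>\<mu> \<xi> r) has_real_derivative
      (\<integral>\<omega>. voter_gen p v R (\<lambda>\<omega>. Hfun p \<omega> (C,E,F)) \<omega> \<partial>\<mu> \<xi> t)) (at t within {0..})"
    using law t H_local[OF fin, of p] H_meas[of p C E F] unfolding voter_law_def by blast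
  have pw: "voter_gen p v R (\<lambda>\<omega>. Hfun p \<omega> (C,E,F)) \<omega>
      = dual_jumpsum p v R (\<lambda>s'. Hfun p \<omega> s') (C,E,F) - dual_q p v R (C,E,F) * Hfun p \<omega> (C,E,F)" for \<omega>
    using duality[OF p fin dis, of v R "fst \<omega>" "snd \<omega>"] by simp
  have iH: "\<And>s'. integrable (\<mu> \<xi> t) (\<lambda>\<omega>. Hfun p \<omega> s')" using H_integrable'[OF ps st p] by blast
  have "(\<integral>\<omega>. voter_gen p v R (\<lambda>\<omega>. Hfun p \<omega> (C,E,F)) \<omega> \<partial>\<mu> \<xi> t)
     = (\<integral>\<omega>. dual_jumpsum p v R (\<lambda>s'. Hfun p \<omega> s') (C,E,F) \<partial>\<mu> \<xi> t) - dual_q p v R (C,E,F) * (\<integral>\<omega>. Hfun p \<omega> (C,E,F) \<partial>\<mu> \<xi> t)"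
    unfolding pw using int_J(1)[of R C E F "\<mu> \<xi> t" "\<lambda>\<omega> s'. Hfun p \<omega> s'" p v] iH
    by (subst Bochner_Integration.integral_diff) auto
  also have "(\<integral>\<omega>. dual_jumpsum p v R (\<lambda>s'. Hfun p \<omega> s') (C,E,F) \<partial>\<mu> \<xi> t)
      = dual_jumpsum p v R (\<lambda>s'. \<integral>\<omega>. Hfun p \<omega> s' \<partial>\<mu> \<xi> t) (C,E,F)"
    using int_J(2)[of R C E F "\<mu> \<xi> t" "\<lambda>\<omega> s'. Hfun p \<omega> s'" p v] iH by blast
  finally show ?thesis using D by simp
qed


lemma voc:
  fixes u G :: "real \<Rightarrow> real" and q t :: real
  assumes t: "0 \<le> t" and D: "\<And>r. r \<in> {0..t} \<Longrightarrow> (u has_real_derivative (G r - q * u r)) (at r within {0..t})"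
  shows "u t = exp (- q * t) * u 0 + integral {0..t} (\<lambda>r. exp (- q * r) * G (t - r))"
proof -
  let ?phi = "\<lambda>r. exp (- q * r) * u (t - r)"
  have "(?phi has_vector_derivative (- (exp (- q * r) * G (t - r)))) (at r within {0..t})" if r: "r \<in> {0..t}" for r
  proof -
    have du: "(u has_real_derivative (G (t - r) - q * u (t - r))) (at (t - r) within ((\<lambda>r. t - r) ` {0..t}))"
      using D[of "t - r"] r by (auto intro: DERIV_subset)
    have dg: "((\<lambda>r. t - r) has_real_derivative -1) (at r within {0..t})"
      by (auto intro!: derivative_eq_intros)
    have dc: "((\<lambda>r. u (t - r)) has_real_derivative (G (t - r) - q * u (t - r)) * -1) (at r within {0..t})"
      using DERIV_image_chain[OF du dg] by (simp add: o_def)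
    have de: "((\<lambda>r. exp (- q * r)) has_real_derivative exp (- q * r) * (- q)) (at r within {0..t})"
      by (auto intro!: derivative_eq_intros)
    have "(?phi has_real_derivative (- (exp (- q * r) * G (t - r)))) (at r within {0..t})"
      by (rule DERIV_cong[OF DERIV_mult[OF de dc]]) (simp add: algebra_simps)
    thus ?thesis unfolding has_real_derivative_iff_has_vector_derivative .
  qed
  hence "((\<lambda>r. - (exp (- q * r) * G (t - r))) has_integral (?phi t - ?phi 0)) {0..t}"
    using t by (intro fundamental_theorem_of_calculus) auto
  from has_integral_neg[OF this]
  have "((\<lambda>r. exp (- q * r) * G (t - r)) has_integral (u t - exp (- q * t) * u 0)) {0..t}"
    by simp
  hence "integral {0..t} (\<lambda>r. exp (- q * r) * G (t - r)) = u t - exp (- q * t) * u 0"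
    by (rule integral_unique)
  thus ?thesis by simp
qed




definition Top :: "real \<Rightarrow> real \<Rightarrow> nat \<Rightarrow> (real \<Rightarrow> 'd::finite dstate \<Rightarrow> real) \<Rightarrow> real \<Rightarrow> 'd dstate \<Rightarrow> real" where
  "Top p v R f t s = integral {0..t} (\<lambda>r. exp (- dual_q p v R s * r) * dual_jumpsum p v R (f (t - r)) s)"

lemma dual_u_Suc: "dual_u p v R g (Suc n) = Top p v R (dual_u p v R g n)"
  by (intro ext) (simp add: Top_def)

lemma J_cont:
  assumes "\<And>s'. s' \<in> tgts R (C,E,F) \<Longrightarrow> continuous_on S (\<lambda>\<tau>. f \<tau> s')"
  shows "continuous_on S (\<lambda>\<tau>. dual_jumpsum p v R (f \<tau>) (C,E,F))"
proof -
  have A: "\<And>e. e \<in> E \<union> F \<Longrightarrow> continuous_on S (\<lambda>\<tau>. f \<tau> (C,E-{e},F-{e}))" using assms tgtsA by blast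
  have B: "\<And>x y E'. x \<in> C \<Longrightarrow> y \<in> ball1 x R - {x} \<Longrightarrow> E' \<in> Pow (edges1 x R - (E \<union> F)) \<Longrightarrow>
     continuous_on S (\<lambda>\<tau>. f \<tau> (tB R C E F x y E'))" using assms tgtsB by blast
  show ?thesis unfolding J_unf
    by (intro continuous_intros A B) auto
qed

lemma Top_formula:
  fixes G :: "real \<Rightarrow> real"
  assumes t: "0 \<le> t" and G: "continuous_on {0..t} G"
  shows "integral {0..t} (\<lambda>r. exp (- q * r) * G (t - r)) = exp (- q * t) * integral {0..t} (\<lambda>\<sigma>. exp (q * \<sigma>) * G \<sigma>)"
proof -
  let ?u = "\<lambda>\<tau>. exp (- q * \<tau>) * integral {0..\<tau>} (\<lambda>\<sigma>. exp (q * \<sigma>) * G \<sigma>)"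
  have cG: "continuous_on {0..t} (\<lambda>\<sigma>. exp (q * \<sigma>) * G \<sigma>)" using G by (intro continuous_intros)
  have "?u t = exp (- q * t) * ?u 0 + integral {0..t} (\<lambda>r. exp (- q * r) * G (t - r))"
  proof (rule voc[OF t])
    fix r assume r: "r \<in> {0..t}"
    have di: "((\<lambda>\<tau>. integral {0..\<tau>} (\<lambda>\<sigma>. exp (q * \<sigma>) * G \<sigma>)) has_real_derivative exp (q * r) * G r) (at r within {0..t})"
      using integral_has_vector_derivative[OF cG r] by (simp add: has_real_derivative_iff_has_vector_derivative)
    have de: "((\<lambda>\<tau>. exp (- q * \<tau>)) has_real_derivative exp (- q * r) * (- q)) (at r within {0..t})"
      by (auto intro!: derivative_eq_intros)
    show "(?u has_real_derivative (G r - q * ?u r)) (at r within {0..t})"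
      by (rule DERIV_cong[OF DERIV_mult[OF de di]]) (simp add: algebra_simps exp_minus field_simps)
  qed
  thus ?thesis by simp
qed


lemma integrand_cont:
  assumes t: "0 \<le> t" and c: "\<And>s'. s' \<in> tgts R (C,E,F) \<Longrightarrow> continuous_on {0..t} (\<lambda>\<tau>. f \<tau> s')"
  shows "continuous_on {0..t} (\<lambda>r. exp (- q * r) * dual_jumpsum p v R (f (t - r)) (C,E,F))"
proof -
  have G: "continuous_on {0..t} (\<lambda>\<tau>. dual_jumpsum p v R (f \<tau>) (C,E,F))" by (rule J_cont[OF c])
  have "continuous_on {0..t} (\<lambda>r. dual_jumpsum p v R (f (t - r)) (C,E,F))"
    by (rule continuous_on_compose2[OF G]) (auto intro!: continuous_intros)
  thus ?thesis by (intro continuous_intros)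
qed

lemma Top_cont:
  assumes c: "\<And>s' T. s' \<in> tgts R (C,E,F) \<Longrightarrow> continuous_on {0..T} (\<lambda>\<tau>. f \<tau> s')"
  shows "continuous_on {0..T} (\<lambda>t. Top p v R f t (C,E,F))"
proof -
  let ?q = "dual_q p v R (C,E,F)"
  let ?G = "\<lambda>\<tau>. dual_jumpsum p v R (f \<tau>) (C,E,F)"
  have G: "continuous_on {0..T'} ?G" for T' by (rule J_cont[OF c])
  have "continuous_on {0..T} (\<lambda>t. exp (- ?q * t) * integral {0..t} (\<lambda>\<sigma>. exp (?q * \<sigma>) * ?G \<sigma>))"
  proof -
    have cI: "continuous_on {0..T} (\<lambda>\<sigma>. exp (?q * \<sigma>) * ?G \<sigma>)" using G by (intro continuous_intros)
    have "continuous_on {0..T} (\<lambda>t. integral {0..t} (\<lambda>\<sigma>. exp (?q * \<sigma>) * ?G \<sigma>))"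
      by (rule indefinite_integral_continuous_1[OF integrable_continuous_interval[OF cI]])
    thus ?thesis by (intro continuous_intros)
  qed
  moreover have "Top p v R f t (C,E,F) = exp (- ?q * t) * integral {0..t} (\<lambda>\<sigma>. exp (?q * \<sigma>) * ?G \<sigma>)"
    if "t \<in> {0..T}" for t
    unfolding Top_def using that by (intro Top_formula G) auto
  ultimately show ?thesis using continuous_on_cong by (smt (verit, ccfv_threshold))
qed

lemma Top_add:
  assumes t: "0 \<le> t"
    and cf: "\<And>s'. s' \<in> tgts R (C,E,F) \<Longrightarrow> continuous_on {0..t} (\<lambda>\<tau>. f \<tau> s')"
    and cg: "\<And>s'. s' \<in> tgts R (C,E,F) \<Longrightarrow> continuous_on {0..t} (\<lambda>\<tau>. g \<tau> s')"
  shows "Top p v R (\<lambda>\<tau> s'. f \<tau> s' + g \<tau> s') t (C,E,F) = Top p v R f t (C,E,F) + Top p v R g t (C,E,F)"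
proof -
  let ?q = "dual_q p v R (C,E,F)"
  have i1: "(\<lambda>r. exp (- ?q * r) * dual_jumpsum p v R (f (t - r)) (C,E,F)) integrable_on {0..t}"
    by (intro integrable_continuous_interval integrand_cont[OF t cf])
  have i2: "(\<lambda>r. exp (- ?q * r) * dual_jumpsum p v R (g (t - r)) (C,E,F)) integrable_on {0..t}"
    by (intro integrable_continuous_interval integrand_cont[OF t cg])
  show ?thesis unfolding Top_def J_add distrib_left
    by (rule integral_add[OF i1 i2])
qed

lemma Top_cong:
  assumes "\<And>\<tau> s'. \<tau> \<in> {0..t} \<Longrightarrow> s' \<in> tgts R (C,E,F) \<Longrightarrow> f \<tau> s' = g \<tau> s'"
  shows "Top p v R f t (C,E,F) = Top p v R g t (C,E,F)"
  unfolding Top_def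
proof (intro integral_cong arg_cong2[where f="(*)"] refl J_cong)
  fix r s' assume "r \<in> {0..t}" "s' \<in> tgts R (C,E,F)"
  thus "f (t - r) s' = g (t - r) s'" by (intro assms) auto
qed




definition UU :: "('d::finite vconf \<Rightarrow> real \<Rightarrow> 'd vconf measure) \<Rightarrow> 'd vconf \<Rightarrow> real \<Rightarrow> real \<Rightarrow> 'd dstate \<Rightarrow> real" where
  "UU \<mu> \<xi> p t s = (\<integral>\<omega>. Hfun p \<omega> s \<partial>\<mu> \<xi> t)"

primrec Rr :: "real \<Rightarrow> real \<Rightarrow> nat \<Rightarrow> (real \<Rightarrow> 'd::finite dstate \<Rightarrow> real) \<Rightarrow> nat \<Rightarrow> real \<Rightarrow> 'd dstate \<Rightarrow> real" where
  "Rr p v R U 0 = U"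
| "Rr p v R U (Suc N) = Top p v R (Rr p v R U N)"

lemma inv_split: "invS c0 s \<Longrightarrow> (\<And>C E F. s = (C,E,F) \<Longrightarrow> finite C \<Longrightarrow> finite E \<Longrightarrow> finite F \<Longrightarrow> E \<inter> F = {} \<Longrightarrow> card C \<le> c0 \<Longrightarrow> P) \<Longrightarrow> P"
  by (cases s) (auto simp: invS_def)

lemma space_VM: "space VM = UNIV"
  by (auto simp: VM_def space_pair_measure space_PiM PiE_UNIV_domain)

context
  fixes p v :: real and R :: nat and \<mu> :: "'d::finite vconf \<Rightarrow> real \<Rightarrow> 'd vconf measure" and \<xi> :: "'d vconf" and c0 :: nat
  assumes p: "0 < p" "p < 1" and v: "0 < v" and law: "voter_law p v R \<mu>"
begin

lemma UU0: "UU \<mu> \<xi> p 0 s = Hfun p \<xi> s"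
proof -
  have "\<mu> \<xi> 0 = return VM \<xi>" using law unfolding voter_law_def by blast
  moreover have "(\<lambda>\<omega>. Hfun p \<omega> s) \<in> borel_measurable VM" using H_meas by (cases s) auto
  ultimately show ?thesis unfolding UU_def by (simp add: integral_return space_VM)
qed

lemma UU_deriv:
  assumes s: "invS c0 (C,E,F)" and t: "0 \<le> t"
  shows "((\<lambda>r. UU \<mu> \<xi> p r (C,E,F)) has_real_derivative
     (dual_jumpsum p v R (UU \<mu> \<xi> p t) (C,E,F) - dual_q p v R (C,E,F) * UU \<mu> \<xi> p t (C,E,F))) (at t within {0..})"
  using U_deriv[OF law p, of C E F t \<xi>] s t unfolding UU_def invS_def by (simp add: UU_def[abs_def])

lemma UU_cont:
  assumes s: "invS c0 s"
  shows "continuous_on {0..T} (\<lambda>t. UU \<mu> \<xi> p t s)"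
proof -
  obtain C E F where sC: "s = (C,E,F)" by (cases s) auto
  show ?thesis unfolding sC
  proof (rule DERIV_continuous_on)
    fix t assume "t \<in> {0..T}"
    thus "((\<lambda>r. UU \<mu> \<xi> p r (C,E,F)) has_real_derivative
     (dual_jumpsum p v R (UU \<mu> \<xi> p t) (C,E,F) - dual_q p v R (C,E,F) * UU \<mu> \<xi> p t (C,E,F))) (at t within {0..T})"
      using UU_deriv[of C E F t] s sC by (auto intro: DERIV_subset)
  qed
qed

lemma UU_eq:
  assumes s: "invS c0 (C,E,F)" and t: "0 \<le> t"
  shows "UU \<mu> \<xi> p t (C,E,F) = exp (- dual_q p v R (C,E,F) * t) * Hfun p \<xi> (C,E,F) + Top p v R (UU \<mu> \<xi> p) t (C,E,F)"
proof -
  have "UU \<mu> \<xi> p t (C,E,F) = exp (- dual_q p v R (C,E,F) * t) * UU \<mu> \<xi> p 0 (C,E,F)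
     + integral {0..t} (\<lambda>r. exp (- dual_q p v R (C,E,F) * r) * dual_jumpsum p v R (UU \<mu> \<xi> p (t - r)) (C,E,F))"
  proof (rule voc[OF t])
    fix r assume "r \<in> {0..t}"
    thus "((\<lambda>r. UU \<mu> \<xi> p r (C,E,F)) has_real_derivative
     (dual_jumpsum p v R (UU \<mu> \<xi> p r) (C,E,F) - dual_q p v R (C,E,F) * UU \<mu> \<xi> p r (C,E,F))) (at r within {0..t})"
      using UU_deriv[OF s, of r] by (auto intro: DERIV_subset)
  qed
  thus ?thesis unfolding UU0 Top_def .
qed

lemma du_cont: "invS c0 s \<Longrightarrow> continuous_on {0..T} (\<lambda>t. dual_u p v R g n t s)"
proof (induction n arbitrary: s T)
  case 0
  thus ?case by (simp add: continuous_intros)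
next
  case (Suc n)
  obtain C E F where sC: "s = (C,E,F)" by (cases s) auto
  show ?case unfolding dual_u_Suc sC
    by (rule Top_cont) (use Suc tgts_inv sC in blast)
qed

lemma Rr_cont: "invS c0 s \<Longrightarrow> continuous_on {0..T} (\<lambda>t. Rr p v R (UU \<mu> \<xi> p) N t s)"
proof (induction N arbitrary: s T)
  case 0
  thus ?case by (simp add: UU_cont)
next
  case (Suc n)
  obtain C E F where sC: "s = (C,E,F)" by (cases s) auto
  show ?case unfolding Rr.simps sC
    by (rule Top_cont) (use Suc tgts_inv sC in blast)
qed

lemma decomp: "invS c0 s \<Longrightarrow> 0 \<le> t \<Longrightarrow>
  Rr p v R (UU \<mu> \<xi> p) N t s = dual_u p v R (Hfun p \<xi>) N t s + Rr p v R (UU \<mu> \<xi> p) (Suc N) t s"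
proof (induction N arbitrary: s t)
  case 0
  obtain C E F where sC: "s = (C,E,F)" by (cases s) auto
  show ?case unfolding sC using UU_eq[of C E F t] 0 sC by simp
next
  case (Suc N)
  obtain C E F where sC: "s = (C,E,F)" by (cases s) auto
  have "Rr p v R (UU \<mu> \<xi> p) (Suc N) t s = Top p v R (Rr p v R (UU \<mu> \<xi> p) N) t (C,E,F)" by (simp add: sC)
  also have "\<dots> = Top p v R (\<lambda>\<tau> s'. dual_u p v R (Hfun p \<xi>) N \<tau> s' + Rr p v R (UU \<mu> \<xi> p) (Suc N) \<tau> s') t (C,E,F)"
  proof (rule Top_cong)
    fix \<tau> s' assume a: "\<tau> \<in> {0..t}" "s' \<in> tgts R (C,E,F)"
    have "invS c0 s'" using tgts_inv a(2) Suc.prems(1) sC by blast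
    thus "Rr p v R (UU \<mu> \<xi> p) N \<tau> s' = dual_u p v R (Hfun p \<xi>) N \<tau> s' + Rr p v R (UU \<mu> \<xi> p) (Suc N) \<tau> s'"
      using Suc.IH[of s' \<tau>] a(1) by (simp del: Rr.simps)
  qed
  also have "\<dots> = Top p v R (dual_u p v R (Hfun p \<xi>) N) t (C,E,F) + Top p v R (Rr p v R (UU \<mu> \<xi> p) (Suc N)) t (C,E,F)"
  proof (rule Top_add)
    show "0 \<le> t" using Suc.prems by simp
  next
    fix s' assume "s' \<in> tgts R (C,E,F)"
    hence i: "invS c0 s'" using tgts_inv Suc.prems(1) sC by blast
    show "continuous_on {0..t} (\<lambda>\<tau>. dual_u p v R (Hfun p \<xi>) N \<tau> s')" by (rule du_cont[OF i])
    show "continuous_on {0..t} (\<lambda>\<tau>. Rr p v R (UU \<mu> \<xi> p) (Suc N) \<tau> s')" by (rule Rr_cont[OF i])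
  qed
  finally show ?case unfolding sC dual_u_Suc by simp
qed

lemma partial: "invS c0 s \<Longrightarrow> 0 \<le> t \<Longrightarrow>
  UU \<mu> \<xi> p t s = (\<Sum>n<N. dual_u p v R (Hfun p \<xi>) n t s) + Rr p v R (UU \<mu> \<xi> p) N t s"
proof (induction N)
  case 0 thus ?case by simp
next
  case (Suc N) thus ?case using decomp[of s t N] by simp
qed

end




definition KK :: "'d::finite itself \<Rightarrow> nat \<Rightarrow> nat" where "KK _ R = (2*R+1)^CARD('d) * CARD('d)"
definition LL :: "'d::finite itself \<Rightarrow> nat \<Rightarrow> nat" where "LL _ R = (2*R+1)^CARD('d) * 2^(KK TYPE('d) R)"

definition bb :: "real \<Rightarrow> 'd::finite dstate \<Rightarrow> real" where
  "bb p s = (case s of (C,E,F) \<Rightarrow> inverse p ^ card E * inverse (1-p) ^ card F)"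

lemma bb_nonneg: "0 < p \<Longrightarrow> p < 1 \<Longrightarrow> 0 \<le> bb p s"
  by (cases s) (simp add: bb_def)

lemma bb_mono:
  assumes p: "0 < p" "p < 1" and "card E' \<le> card E" "card F' \<le> card F"
  shows "bb p (C',E',F') \<le> bb p (C,E,F)"
proof -
  have "inverse p ^ card E' \<le> inverse p ^ card E" using p assms(3) by (intro power_increasing) (auto simp: one_le_inverse)
  moreover have "inverse (1-p) ^ card F' \<le> inverse (1-p) ^ card F" using p assms(4) by (intro power_increasing) (auto simp: one_le_inverse)
  ultimately show ?thesis unfolding bb_def using p by (auto intro!: mult_mono)
qed

lemma cf_bb:
  assumes p: "0 < p" "p < 1" and fin: "finite E" "finite F" and E': "E' \<subseteq> edges1 x R - (E \<union> F)"
  shows "cf p R E F (x::'d::finite site) E' * bb p (tB R C E F x y E') \<le> bb p (C,E,F)"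
proof -
  let ?S = "edges1 x R - (E \<union> F)"
  have fS: "finite ?S" using finite_edges1[of x R] by blast
  have fE': "finite E'" using E' fS finite_subset by blast
  have d1: "E \<inter> E' = {}" using E' by blast
  have d2: "F \<inter> (?S - E') = {}" by blast
  have c1: "card (E \<union> E') = card E + card E'" using fin fE' d1 by (simp add: card_Un_disjoint)
  have c2: "card (F \<union> (?S - E')) = card F + card (?S - E')" using fin fS d2 by (simp add: card_Un_disjoint)
  have h1: "p ^ card E' * inverse p ^ (card E + card E') = inverse p ^ card E" using p by (intro pw_cancel) auto
  have h2: "(1-p) ^ card (?S - E') * inverse (1-p) ^ (card F + card (?S - E')) = inverse (1-p) ^ card F" using p by (intro pw_cancel) auto
  have "cf p R E F x E' * bb p (tB R C E F x y E') = (1 / (real (ballcard TYPE('d) R) - 1)) * bb p (C,E,F)"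
  proof -
    have "cf p R E F x E' * bb p (tB R C E F x y E') = (1 / (real (ballcard TYPE('d) R) - 1)) *
       ((p ^ card E' * inverse p ^ (card E + card E')) * ((1-p) ^ card (?S - E') * inverse (1-p) ^ (card F + card (?S - E'))))"
      unfolding cf_def tB_def bb_def prod.case c1 c2 by (simp add: ac_simps)
    thus ?thesis unfolding h1 h2 bb_def by simp
  qed
  also have "\<dots> \<le> 1 * bb p (C,E,F)"
    using cB_le1[where 'd='d and R=R] bb_nonneg[OF p] by (intro mult_right_mono) auto
  finally show ?thesis by simp
qed

lemma voter_sum_bound:
  fixes C :: "'d::finite site set"
  assumes fC: "finite C" "card C \<le> c0"
    and le: "\<And>x y E'. x \<in> C \<Longrightarrow> y \<in> ball1 x R - {x} \<Longrightarrow> E' \<in> Pow (edges1 x R - (E \<union> F)) \<Longrightarrow> h x y E' \<le> B"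
    and B: "0 \<le> B"
  shows "(\<Sum>x\<in>C. \<Sum>y\<in>ball1 x R - {x}. \<Sum>E'\<in>Pow (edges1 x R - (E\<union>F)). h x y E') \<le> real c0 * real (LL TYPE('d) R) * B"
proof -
  have "(\<Sum>E'\<in>Pow (edges1 x R - (E\<union>F)). h x y E') \<le> 2 ^ KK TYPE('d) R * B" if "x \<in> C" "y \<in> ball1 x R - {x}" for x :: "'d site" and y
  proof -
    have "(\<Sum>E'\<in>Pow (edges1 x R - (E\<union>F)). h x y E') \<le> of_nat (card (Pow (edges1 x R - (E\<union>F)))) * B"
      by (rule sum_bounded_above) (use le that in auto)
    also have "card (Pow (edges1 x R - (E\<union>F))) = 2 ^ card (edges1 x R - (E\<union>F))"
      using finite_edges1[of x R] by (simp add: card_Pow)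
    also have "card (edges1 x R - (E\<union>F)) \<le> KK TYPE('d) R"
      using card_mono[OF finite_edges1[of x R], of "edges1 x R - (E\<union>F)"] card_edges1_le[of x R] unfolding KK_def by auto
    hence "real (2 ^ card (edges1 x R - (E\<union>F))) \<le> 2 ^ KK TYPE('d) R"
      by (simp add: power_increasing)
    hence "real (2 ^ card (edges1 x R - (E\<union>F))) * B \<le> 2 ^ KK TYPE('d) R * B" using B by (rule mult_right_mono)
    finally show ?thesis .
  qed
  hence "(\<Sum>y\<in>ball1 x R - {x}. \<Sum>E'\<in>Pow (edges1 x R - (E\<union>F)). h x y E') \<le> real (LL TYPE('d) R) * B" if "x \<in> C" for x :: "'d site"
  proof -
    have "(\<Sum>y\<in>ball1 x R - {x}. \<Sum>E'\<in>Pow (edges1 x R - (E\<union>F)). h x y E') \<le> of_nat (card (ball1 x R - {x})) * (2 ^ KK TYPE('d) R * B)"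
      by (rule sum_bounded_above) (use that \<open>\<And>x y. x \<in> C \<Longrightarrow> y \<in> ball1 x R - {x} \<Longrightarrow> _\<close> in auto)
    also have "card (ball1 x R - {x}) \<le> (2*R+1)^CARD('d)"
      using card_mono[OF finite_ball1[of x R], of "ball1 x R - {x}"] card_ball1_le[of x R] by auto
    hence "real (card (ball1 x R - {x})) \<le> real ((2*R+1)^CARD('d))" by (simp only: of_nat_le_iff)
    hence "of_nat (card (ball1 x R - {x})) * (2 ^ KK TYPE('d) R * B) \<le> real ((2*R+1)^CARD('d)) * (2 ^ KK TYPE('d) R * B)"
      using B by (intro mult_right_mono) auto
    also have "\<dots> = real (LL TYPE('d) R) * B" unfolding LL_def by simp
    finally show ?thesis .
  qed
  hence "(\<Sum>x\<in>C. \<Sum>y\<in>ball1 x R - {x}. \<Sum>E'\<in>Pow (edges1 x R - (E\<union>F)). h x y E') \<le> of_nat (card C) * (real (LL TYPE('d) R) * B)"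
    by (intro sum_bounded_above) auto
  also have "\<dots> \<le> real c0 * (real (LL TYPE('d) R) * B)"
    using fC B by (intro mult_right_mono) auto
  finally show ?thesis by simp
qed


lemma Jb:
  fixes C :: "'d::finite site set"
  assumes p: "0 < p" "p < 1" and v: "0 \<le> v" and s: "invS c0 (C,E,F)"
  shows "dual_jumpsum p v R (bb p) (C,E,F) \<le> (dual_q p v R (C,E,F) + real c0 * real (LL TYPE('d) R)) * bb p (C,E,F)"
proof -
  have fin: "finite C" "finite E" "finite F" "card C \<le> c0" using s by (auto simp: invS_def)
  let ?b = "bb p (C,E,F)"
  let ?M = "real c0 * real (LL TYPE('d) R)"
  have Eb: "(\<Sum>e\<in>E\<union>F. v * bb p (C, E-{e}, F-{e})) \<le> (\<Sum>e\<in>E\<union>F. v * 1) * ?b"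
    unfolding sum_distrib_right
  proof (rule sum_mono)
    fix e assume "e \<in> E \<union> F"
    have "bb p (C, E-{e}, F-{e}) \<le> ?b" using fin by (intro bb_mono p) (auto intro: card_mono)
    thus "v * bb p (C, E-{e}, F-{e}) \<le> v * 1 * ?b" using v by (simp add: mult_left_mono)
  qed
  have Vb: "(\<Sum>x\<in>C. \<Sum>y\<in>ball1 x R - {x}. \<Sum>E'\<in>Pow (edges1 x R - (E\<union>F)). cf p R E F x E' * bb p (tB R C E F x y E')) \<le> ?M * ?b"
    by (rule voter_sum_bound) (use p fin cf_bb bb_nonneg in auto)
  have Vq: "0 \<le> (\<Sum>x\<in>C. \<Sum>y\<in>ball1 x R - {x}. \<Sum>E'\<in>Pow (edges1 x R - (E\<union>F)). cf p R E F x E' * 1)"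
    using p by (intro sum_nonneg) (auto intro: cf_nonneg)
  have q: "dual_q p v R (C,E,F) = (\<Sum>e\<in>E\<union>F. v * 1) + (\<Sum>x\<in>C. \<Sum>y\<in>ball1 x R - {x}. \<Sum>E'\<in>Pow (edges1 x R - (E\<union>F)). cf p R E F x E' * 1)"
    unfolding dual_q_def J_unf ..
  have "dual_jumpsum p v R (bb p) (C,E,F) \<le> (\<Sum>e\<in>E\<union>F. v * 1) * ?b + ?M * ?b"
    unfolding J_unf using Eb Vb by linarith
  also have "\<dots> \<le> (dual_q p v R (C,E,F) + ?M) * ?b"
    unfolding q distrib_right using Vq bb_nonneg[OF p, of "(C,E,F)"] by (simp add: mult_nonneg_nonneg)
  finally show ?thesis .
qed

lemma q_le:
  fixes C :: "'d::finite site set"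
  assumes p: "0 < p" "p < 1" and v: "0 \<le> v" and s: "invS c0 (C,E,F)"
  shows "dual_q p v R (C,E,F) \<le> v * real (card (E \<union> F)) + real c0 * real (LL TYPE('d) R)"
proof -
  have fin: "finite C" "finite E" "finite F" "card C \<le> c0" using s by (auto simp: invS_def)
  have Vq: "(\<Sum>x\<in>C. \<Sum>y\<in>ball1 x R - {x}. \<Sum>E'\<in>Pow (edges1 x R - (E\<union>F)). cf p R E F x E' * 1) \<le> real c0 * real (LL TYPE('d) R) * 1"
    by (rule voter_sum_bound) (use p fin cf_le1[of p] in auto)
  show ?thesis unfolding dual_q_def J_unf using Vq by (simp add: mult.commute)
qed

definition lev :: "real \<Rightarrow> nat \<Rightarrow> nat \<Rightarrow> 'd::finite dstate \<Rightarrow> real" where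
  "lev v c0 R s = (case s of (C,E,F) \<Rightarrow> v * real (card (E \<union> F)) + 2 * (real c0 * real (LL TYPE('d) R)))"

lemma lev_nonneg: "0 \<le> v \<Longrightarrow> 0 \<le> lev v c0 R s"
  by (cases s) (simp add: lev_def)

lemma lev_tg:
  fixes C :: "'d::finite site set"
  assumes v: "0 \<le> v" and s: "invS c0 (C,E,F)" and s': "s' \<in> tgts R (C,E,F)"
  shows "lev v c0 R s' \<le> lev v c0 R (C,E,F) + v * real (KK TYPE('d) R)"
proof -
  have fin: "finite C" "finite E" "finite F" using s by (auto simp: invS_def)
  from tgts_cases[OF s'] show ?thesis
  proof (elim disjE bexE exE conjE)
    fix e assume "e \<in> E \<union> F" "s' = (C, E - {e}, F - {e})"
    have "card ((E - {e}) \<union> (F - {e})) \<le> card (E \<union> F)" using fin by (intro card_mono) auto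
    hence "v * real (card ((E - {e}) \<union> (F - {e}))) \<le> v * real (card (E \<union> F))" using v by (intro mult_left_mono) auto
    moreover have "0 \<le> v * real (KK TYPE('d) R)" using v by simp
    ultimately show ?thesis unfolding \<open>s' = _\<close> lev_def by simp
  next
    fix x y E' assume h: "s' = tB R C E F x y E'" "x \<in> C" "y \<in> ball1 x R - {x}" "E' \<in> Pow (edges1 x R - (E \<union> F))"
    have sub: "(E \<union> E') \<union> (F \<union> (edges1 x R - (E \<union> F) - E')) \<subseteq> (E \<union> F) \<union> edges1 x R" using h(4) by blast
    have "card ((E \<union> E') \<union> (F \<union> (edges1 x R - (E \<union> F) - E'))) \<le> card ((E \<union> F) \<union> edges1 x R)"
      using fin finite_edges1[of x R] by (intro card_mono[OF _ sub]) auto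
    also have "\<dots> \<le> card (E \<union> F) + card (edges1 x R)" by (rule card_Un_le)
    also have "\<dots> \<le> card (E \<union> F) + KK TYPE('d) R" using card_edges1_le[of x R] unfolding KK_def by simp
    finally have "real (card ((E \<union> E') \<union> (F \<union> (edges1 x R - (E \<union> F) - E')))) \<le> real (card (E \<union> F)) + real (KK TYPE('d) R)"
      by linarith
    hence "v * real (card ((E \<union> E') \<union> (F \<union> (edges1 x R - (E \<union> F) - E')))) \<le> v * (real (card (E \<union> F)) + real (KK TYPE('d) R))"
      using v by (intro mult_left_mono) auto
    thus ?thesis unfolding h(1) tB_def lev_def prod.case by (simp add: algebra_simps)
  qed
qed




definition pii :: "real \<Rightarrow> real \<Rightarrow> nat \<Rightarrow> real" where
  "pii D x N = (\<Prod>i<N. (x + real i * D) / (x + real i * D + 1))"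

lemma pii_0[simp]: "pii D x 0 = 1" by (simp add: pii_def)

lemma pii_Suc: "pii D x (Suc N) = x / (x + 1) * pii D (x + D) N"
  unfolding pii_def prod.lessThan_Suc_shift by (simp add: algebra_simps)

lemma frac_mono: "0 \<le> a \<Longrightarrow> a \<le> b \<Longrightarrow> a / (a + 1) \<le> b / (b + (1::real))"
  by (simp add: divide_simps) (simp add: algebra_simps)

lemma pii_nonneg: "0 \<le> x \<Longrightarrow> 0 \<le> D \<Longrightarrow> 0 \<le> pii D x N"
  unfolding pii_def by (intro prod_nonneg) auto

lemma pii_mono: "0 \<le> x \<Longrightarrow> x \<le> y \<Longrightarrow> 0 \<le> D \<Longrightarrow> pii D x N \<le> pii D y N"
  unfolding pii_def by (intro prod_mono conjI frac_mono) auto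

lemma pii_lim:
  assumes x: "0 \<le> x" and D: "0 \<le> D"
  shows "(\<lambda>N. pii D x N) \<longlonglongrightarrow> 0"
proof -
  define c where "c = x + D + 1"
  have c: "c \<ge> 1" using x D by (simp add: c_def)
  have fac: "(x + real i * D) / (x + real i * D + 1) \<le> exp (- (1 / c) * inverse (real (Suc i)))" for i
  proof -
    let ?y = "x + real i * D"
    have y: "0 \<le> ?y" using x D by simp
    have "?y / (?y + 1) = 1 + (- 1 / (?y + 1))" using y by (simp add: field_simps)
    also have "\<dots> \<le> exp (- 1 / (?y + 1))" by (rule exp_ge_add_one_self)
    also have "- 1 / (?y + 1) \<le> - (1 / c) * inverse (real (Suc i))"
    proof -
      have "?y + 1 \<le> c * real (Suc i)" unfolding c_def using x D
        by (simp add: algebra_simps)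
      hence "1 / (c * real (Suc i)) \<le> 1 / (?y + 1)" using y c by (intro divide_left_mono) auto
      thus ?thesis by (simp add: field_simps)
    qed
    hence "exp (- 1 / (?y + 1)) \<le> exp (- (1 / c) * inverse (real (Suc i)))" by simp
    finally show ?thesis .
  qed
  have le: "pii D x N \<le> exp (- (1 / c) * harm N)" for N
  proof -
    have "pii D x N \<le> (\<Prod>i<N. exp (- (1 / c) * inverse (real (Suc i))))"
      unfolding pii_def using x D fac by (intro prod_mono) auto
    also have "\<dots> = exp (\<Sum>i<N. - (1 / c) * inverse (real (Suc i)))" by (simp add: exp_sum)
    also have "(\<Sum>i<N. - (1 / c) * inverse (real (Suc i))) = - (1 / c) * harm N"
      by (simp add: harm_altdef sum_distrib_left)
    finally show ?thesis .
  qed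
  have "filterlim (\<lambda>N. (1 / c) * harm N) at_top sequentially"
    by (rule filterlim_tendsto_pos_mult_at_top[OF tendsto_const _ harm_at_top]) (use c in simp)
  hence "filterlim (\<lambda>N. - ((1 / c) * harm N)) at_bot sequentially"
    by (simp add: filterlim_uminus_at_top)
  hence "(\<lambda>N. exp (- ((1 / c) * harm N))) \<longlonglongrightarrow> 0"
    by (rule filterlim_compose[OF exp_at_bot])
  hence lim: "(\<lambda>N. exp (- (1 / c) * harm N)) \<longlonglongrightarrow> 0" by simp
  show ?thesis
    by (rule tendsto_sandwich[OF _ _ tendsto_const lim]) (use x D le pii_nonneg in auto)
qed




lemma J_zero: "dual_jumpsum p v R (\<lambda>_. 0) s = 0"
  by (cases s) (simp add: J_unf)

lemma exp_int:
  fixes a t :: real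
  assumes a: "0 < a" and t: "0 \<le> t"
  shows "((\<lambda>r. exp (- a * r)) has_integral ((1 - exp (- a * t)) / a)) {0..t}"
proof -
  define F where "F = (\<lambda>r::real. - exp (- a * r) / a)"
  have "((\<lambda>r. exp (- a * r)) has_integral (F t - F 0)) {0..t}"
  proof (rule fundamental_theorem_of_calculus[of 0 t F "\<lambda>r. exp (- a * r)"])
    show "0 \<le> t" by (rule t)
  next
    fix r assume "r \<in> {0..t}"
    have "(F has_real_derivative exp (- a * r)) (at r within {0..t})"
      unfolding F_def using a by (auto intro!: derivative_eq_intros)
    thus "(F has_vector_derivative exp (- a * r)) (at r within {0..t})"
      by (simp add: has_real_derivative_iff_has_vector_derivative)
  qed
  thus ?thesis by (simp add: F_def diff_divide_distrib)
qed

context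
  fixes p v :: real and R :: nat and \<mu> :: "'d::finite vconf \<Rightarrow> real \<Rightarrow> 'd vconf measure" and \<xi> :: "'d vconf" and c0 :: nat
  assumes p: "0 < p" "p < 1" and v: "0 < v" and law: "voter_law p v R \<mu>"
begin

lemma UU_nonneg: "0 \<le> UU \<mu> \<xi> p t s"
  unfolding UU_def by (rule Bochner_Integration.integral_nonneg) (rule H_nonneg[OF p])

lemma UU_le: "0 \<le> t \<Longrightarrow> UU \<mu> \<xi> p t s \<le> bb p s"
proof -
  assume t: "0 \<le> t"
  have ps: "prob_space (\<mu> \<xi> t)" and st: "sets (\<mu> \<xi> t) = sets VM" using law t unfolding voter_law_def by blast+
  interpret prob_space "\<mu> \<xi> t" by fact
  obtain C E F where sC: "s = (C,E,F)" by (cases s) auto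
  have "UU \<mu> \<xi> p t s \<le> (\<integral>\<omega>. bb p s \<partial>\<mu> \<xi> t)"
    unfolding UU_def sC
    by (rule integral_mono) (use H_integrable[OF ps st p] H_le[OF p] in \<open>auto simp: bb_def\<close>)
  also have "\<dots> = bb p s" by (simp add: prob_space)
  finally show ?thesis .
qed

lemma Rr_nonneg: "invS c0 s \<Longrightarrow> 0 \<le> t \<Longrightarrow> 0 \<le> Rr p v R (UU \<mu> \<xi> p) N t s"
proof (induction N arbitrary: s t)
  case 0 thus ?case by (simp add: UU_nonneg)
next
  case (Suc N)
  obtain C E F where sC: "s = (C,E,F)" by (cases s) auto
  have tg: "\<And>s'. s' \<in> tgts R (C,E,F) \<Longrightarrow> invS c0 s'" using tgts_inv Suc.prems(1) sC by blast
  have tc: "\<And>s'. s' \<in> tgts R (C,E,F) \<Longrightarrow> continuous_on {0..t} (\<lambda>\<tau>. Rr p v R (UU \<mu> \<xi> p) N \<tau> s')"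
    by (rule Rr_cont[OF p v law]) (rule tg)
  show ?case unfolding sC Rr.simps Top_def
  proof (rule integral_nonneg)
    show "(\<lambda>r. exp (- dual_q p v R (C,E,F) * r) * dual_jumpsum p v R (Rr p v R (UU \<mu> \<xi> p) N (t - r)) (C,E,F)) integrable_on {0..t}"
      by (intro integrable_continuous_interval integrand_cont Suc.prems(2) tc)
  next
    fix r assume r: "r \<in> {0..t}"
    have "dual_jumpsum p v R (\<lambda>_. 0) (C,E,F) \<le> dual_jumpsum p v R (Rr p v R (UU \<mu> \<xi> p) N (t - r)) (C,E,F)"
      by (rule J_mono) (use p v r tg Suc.IH in auto)
    thus "0 \<le> exp (- dual_q p v R (C,E,F) * r) * dual_jumpsum p v R (Rr p v R (UU \<mu> \<xi> p) N (t - r)) (C,E,F)"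
      by (simp add: J_zero)
  qed
qed

lemma Rr_bound:
  "invS c0 s \<Longrightarrow> 0 \<le> t \<Longrightarrow> Rr p v R (UU \<mu> \<xi> p) N t s \<le>
     bb p s * exp ((real c0 * real (LL TYPE('d) R) + 1) * t) * pii (v * real (KK TYPE('d) R)) (lev v c0 R s) N"
proof (induction N arbitrary: s t)
  case 0
  have "UU \<mu> \<xi> p t s \<le> bb p s" by (rule UU_le[OF 0(2)])
  also have "\<dots> \<le> bb p s * exp ((real c0 * real (LL TYPE('d) R) + 1) * t)"
    using bb_nonneg[OF p, of s] 0(2) by (intro mult_le_cancel_left1[THEN iffD2] disjI1 conjI) (auto intro: mult_nonneg_nonneg)
  finally show ?case by simp
next
  case (Suc N)
  obtain C E F where sC: "s = (C,E,F)" by (cases s) auto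
  have si: "invS c0 (C,E,F)" using Suc.prems sC by simp
  have t: "0 \<le> t" by (rule Suc.prems(2))
  have tg: "\<And>s'. s' \<in> tgts R (C,E,F) \<Longrightarrow> invS c0 s'" using tgts_inv si by blast
  define M where "M = real c0 * real (LL TYPE('d) R)"
  define D where "D = v * real (KK TYPE('d) R)"
  define q where "q = dual_q p v R (C,E,F)"
  define l where "l = lev v c0 R (C,E,F)"
  define pi' where "pi' = pii D (l + D) N"
  define B where "B = bb p (C,E,F)"
  define a where "a = q + M + 1"
  define Kc where "Kc = (q + M) * B * pi' * exp ((M + 1) * t)"
  have M0: "0 \<le> M" unfolding M_def by simp
  have D0: "0 \<le> D" unfolding D_def using v by simp
  have q0: "0 \<le> q" unfolding q_def using p v by (intro q_nonneg) auto
  have l0: "0 \<le> l" unfolding l_def using v by (intro lev_nonneg) auto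
  have pi0: "0 \<le> pi'" unfolding pi'_def using l0 D0 by (intro pii_nonneg) auto
  have B0: "0 \<le> B" unfolding B_def using bb_nonneg[OF p] by blast
  have a0: "0 < a" unfolding a_def using q0 M0 by simp
  have Kc0: "0 \<le> Kc" unfolding Kc_def using q0 M0 B0 pi0 by simp
  have ql: "q + M \<le> l"
    using q_le[OF p _ si, of v R] v unfolding q_def l_def lev_def M_def by simp
  have tc: "\<And>s'. s' \<in> tgts R (C,E,F) \<Longrightarrow> continuous_on {0..t} (\<lambda>\<tau>. Rr p v R (UU \<mu> \<xi> p) N \<tau> s')"
    by (rule Rr_cont[OF p v law]) (rule tg)
  have pw: "exp (- q * r) * dual_jumpsum p v R (Rr p v R (UU \<mu> \<xi> p) N (t - r)) (C,E,F) \<le> Kc * exp (- a * r)"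
    if r: "r \<in> {0..t}" for r
  proof -
    let ?c = "exp ((M + 1) * (t - r)) * pi'"
    have c0': "0 \<le> ?c" using pi0 by simp
    have "dual_jumpsum p v R (Rr p v R (UU \<mu> \<xi> p) N (t - r)) (C,E,F) \<le> dual_jumpsum p v R (\<lambda>s'. ?c * bb p s') (C,E,F)"
    proof (rule J_mono)
      show "0 \<le> p" "p \<le> 1" "0 \<le> v" using p v by auto
    next
      fix s' assume s': "s' \<in> tgts R (C,E,F)"
      have "Rr p v R (UU \<mu> \<xi> p) N (t - r) s' \<le> bb p s' * exp ((M + 1) * (t - r)) * pii D (lev v c0 R s') N"
        using Suc.IH[OF tg[OF s'], of "t - r"] r unfolding M_def D_def by simp
      also have "\<dots> \<le> bb p s' * exp ((M + 1) * (t - r)) * pi'"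
        unfolding pi'_def l_def D_def
        using bb_nonneg[OF p, of s'] lev_nonneg[of v c0 R s'] v lev_tg[of v c0 C E F s' R] si s' D0
        by (intro mult_left_mono pii_mono) (auto simp: D_def)
      finally show "Rr p v R (UU \<mu> \<xi> p) N (t - r) s' \<le> ?c * bb p s'" by (simp add: ac_simps)
    qed
    also have "\<dots> = ?c * dual_jumpsum p v R (bb p) (C,E,F)" by (rule J_cmult)
    also have "\<dots> \<le> ?c * ((q + M) * B)"
      using Jb[OF p _ si, of v R] v c0' unfolding q_def M_def B_def by (intro mult_left_mono) auto
    finally have J1: "dual_jumpsum p v R (Rr p v R (UU \<mu> \<xi> p) N (t - r)) (C,E,F) \<le> ?c * ((q + M) * B)" .
    have "exp (- q * r) * dual_jumpsum p v R (Rr p v R (UU \<mu> \<xi> p) N (t - r)) (C,E,F) \<le> exp (- q * r) * (?c * ((q + M) * B))"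
      using J1 by (intro mult_left_mono) auto
    also have "exp (- q * r) * (?c * ((q + M) * B)) = Kc * exp (- a * r)"
    proof -
      have "exp (- q * r) * exp ((M + 1) * (t - r)) = exp ((M + 1) * t) * exp (- a * r)"
        unfolding mult_exp_exp a_def by (simp add: algebra_simps)
      thus ?thesis unfolding Kc_def by (simp add: ac_simps)
    qed
    finally show ?thesis .
  qed
  have "Rr p v R (UU \<mu> \<xi> p) (Suc N) t s = integral {0..t} (\<lambda>r. exp (- q * r) * dual_jumpsum p v R (Rr p v R (UU \<mu> \<xi> p) N (t - r)) (C,E,F))"
    unfolding sC Rr.simps Top_def q_def ..
  also have "\<dots> \<le> integral {0..t} (\<lambda>r. Kc * exp (- a * r))"
  proof (rule integral_le)
    show "(\<lambda>r. exp (- q * r) * dual_jumpsum p v R (Rr p v R (UU \<mu> \<xi> p) N (t - r)) (C,E,F)) integrable_on {0..t}"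
      unfolding q_def by (intro integrable_continuous_interval integrand_cont t tc)
    show "(\<lambda>r. Kc * exp (- a * r)) integrable_on {0..t}"
      by (intro integrable_continuous_interval continuous_intros)
  qed (use pw in auto)
  also have "integral {0..t} (\<lambda>r. Kc * exp (- a * r)) = Kc * ((1 - exp (- a * t)) / a)"
    by (rule integral_unique[OF has_integral_mult_right[OF exp_int[OF a0 t]]])
  also have "\<dots> \<le> Kc / a"
    using Kc0 a0 by (simp add: divide_simps mult_left_le)
  also have "Kc / a = B * exp ((M + 1) * t) * pi' * ((q + M) / (q + M + 1))"
    unfolding Kc_def a_def by (simp add: field_simps)
  also have "\<dots> \<le> B * exp ((M + 1) * t) * pi' * (l / (l + 1))"
    using B0 pi0 q0 M0 ql by (intro mult_left_mono frac_mono) auto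
  also have "\<dots> = bb p s * exp ((real c0 * real (LL TYPE('d) R) + 1) * t) * pii (v * real (KK TYPE('d) R)) (lev v c0 R s) (Suc N)"
    unfolding pii_Suc B_def sC M_def pi'_def l_def D_def by (simp add: ac_simps)
  finally show ?case .
qed

end


theorem lemma4p9:
  fixes p v :: real and R :: nat
    and \<mu> :: "'d::finite vconf \<Rightarrow> real \<Rightarrow> 'd vconf measure"
    and \<eta> :: "'d site \<Rightarrow> bool" and \<zeta> :: "'d edge \<Rightarrow> bool"
    and C :: "'d site set" and E F :: "'d edge set" and t :: real
  assumes "0 < p" and "p < 1" and "0 < v"
    and "voter_law p v R \<mu>"
    and "finite C" and "finite E" and "finite F" and "E \<inter> F = {}"
    and "0 \<le> t"
  shows "(\<integral>\<xi>. Hfun p \<xi> (C, E, F) \<partial>(\<mu> (\<eta>, \<zeta>) t))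
         = dual_expect p v R (Hfun p (\<eta>, \<zeta>)) t (C, E, F)"
proof -
  have si: "invS (card C) (C,E,F)" using assms by (simp add: invS_def)
  let ?U = "UU \<mu> (\<eta>, \<zeta>) p t (C,E,F)"
  let ?Rn = "\<lambda>N. Rr p v R (UU \<mu> (\<eta>, \<zeta>) p) N t (C,E,F)"
  let ?f = "\<lambda>n. dual_u p v R (Hfun p (\<eta>, \<zeta>)) n t (C,E,F)"
  have part: "?U = (\<Sum>n<N. ?f n) + ?Rn N" for N
    by (rule partial[OF assms(1,2,3,4) si assms(9)])
  have Rlim: "?Rn \<longlonglongrightarrow> 0"
  proof (rule tendsto_sandwich[OF _ _ tendsto_const])
    show "\<forall>\<^sub>F N in sequentially. 0 \<le> ?Rn N"
      using Rr_nonneg[OF assms(1,2,3,4) si assms(9)] by simp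
    show "\<forall>\<^sub>F N in sequentially. ?Rn N \<le> bb p (C,E,F) * exp ((real (card C) * real (LL TYPE('d) R) + 1) * t)
        * pii (v * real (KK TYPE('d) R)) (lev v (card C) R (C,E,F)) N"
      using Rr_bound[OF assms(1,2,3,4) si assms(9)] by simp
    have "(\<lambda>N. pii (v * real (KK TYPE('d) R)) (lev v (card C) R (C,E,F)) N) \<longlonglongrightarrow> 0"
      using assms(3) by (intro pii_lim lev_nonneg) auto
    thus "(\<lambda>N. bb p (C,E,F) * exp ((real (card C) * real (LL TYPE('d) R) + 1) * t)
        * pii (v * real (KK TYPE('d) R)) (lev v (card C) R (C,E,F)) N) \<longlonglongrightarrow> 0"
      by (intro tendsto_mult_right_zero)
  qed
  have "(\<lambda>N. \<Sum>n<N. ?f n) = (\<lambda>N. ?U - ?Rn N)" using part by (intro ext) (metis add_diff_cancel_right')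
  moreover have "(\<lambda>N. ?U - ?Rn N) \<longlonglongrightarrow> ?U - 0" by (intro tendsto_diff tendsto_const Rlim)
  ultimately have "?f sums ?U" unfolding sums_def by simp
  hence "suminf ?f = ?U" by (rule sums_unique[symmetric])
  thus ?thesis unfolding dual_expect_def UU_def by simp
qed


end
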